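(* Let $0<\mu_1<\mu_2$, $\alpha\in(0,1)$, $\delta\ge0$, $\sigma\in(0,1/2)$. Let $c_0:[0,+\infty)\to(0,+\infty)$ be of class $C^3$ with $\mu_1\le c_0(t)\le\mu_2$ for all $t\ge0$ and $$\sup_{t\ge0}\big(|c_0'(t)|+|c_0''(t)|+|c_0'''(t)|\big)<+\infty.$$ Let $\{\lambda_n\},\{\varepsilon_n\}$ be sequences of positive reals with $\lambda_n\to+\infty$, $\varepsilon_n\to0$, and $\limsup_{n\to\infty}\varepsilon_n\lambda_n^\alpha<+\infty$. Define $c_n(t):=\gamma(\varepsilon_n,\lambda_n,t)$, where $$\gamma(\varepsilon,\lambda,t):=c_0(t)-\varepsilon\sin(2a)-\frac{\varepsilon^2}{4}\frac{\sin^4 a}{c_0(t)}-\frac{5}{16\lambda^2}\Big[\frac{c_0'(t)}{c_0(t)}\Big]^2+\frac{\varepsilon}{2\lambda}\frac{c_0'(t)}{c_0(t)^{3/2}}\sin^2 a+\frac{1}{4\lambda^2}\frac{c_0''(t)}{c_0(t)}+\frac{\delta^2}{\lambda^{2-4\sigma}},\quad a=a(\lambda,t):=\lambda\int_0^tc_0(s)^{1/2}ds,$$ and let $w_n$ be the solution of $w_n''+2\delta\lambda_n^{2\sigma}w_n'+\lambda_n^2c_n(t)w_n=0$ on $[0,+\infty)$ with $w_n(0)=0$, $w_n'(0)=1$. Set $$\mu_3:=\frac{\mu_1\min\{1,\mu_1\}}{2\mu_2^2},\qquad\mu_4:=\frac{1}{4\mu_2^{1/2}}.$$ Then: (i) $c_n\to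 c_0$ uniformly on $[0,+\infty)$; (ii) $\displaystyle\limsup_{n\to\infty}\operatorname{Hold}_\alpha(c_n)\le\max\Big\{\operatorname{Hold}_\alpha(c_0),\ 2\mu_2^{\alpha/2}\limsup_{n\to\infty}(\varepsilon_n\lambda_n^\alpha)\Big\}$; (iii) for every $n$ large enough, $$|w_n'(t)|^2+\lambda_n^2|w_n(t)|^2\ge\mu_3\exp\big(\mu_4\varepsilon_n\lambda_n t-2\delta\lambda_n^{2\sigma}t\big)\qquad\forall t\ge0.$$
   Context: For $c:[0,+\infty)\to\mathbb{R}$, $\operatorname{Hold}_\alpha(c):=\sup\{|c(t)-c(s)|/|t-s|^\alpha:\ t,s\ge0,\ t\neq s\}$. *)

theory Defs
  imports "HOL-Analysis.Analysis"
begin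

definition Hold :: "real \<Rightarrow> (real \<Rightarrow> real) \<Rightarrow> ereal" where
  "Hold \<alpha> c = (SUP p \<in> {(t, s). t \<ge> 0 \<and> s \<ge> 0 \<and> t \<noteq> s}.
       ereal (\<bar>c (fst p) - c (snd p)\<bar> / \<bar>fst p - snd p\<bar> powr \<alpha>))"

definition phase :: "(real \<Rightarrow> real) \<Rightarrow> real \<Rightarrow> real \<Rightarrow> real" where
  "phase c0 lm t = lm * integral {0..t} (\<lambda>s. sqrt (c0 s))"

text \<open>gamma(eps,lambda,t); c1, c2 stand for the first and second derivatives of c0.\<close>
definition gamma :: "(real \<Rightarrow> real) \<Rightarrow> (real \<Rightarrow> real) \<Rightarrow> (real \<Rightarrow> real) \<Rightarrow> real \<Rightarrow> real
    \<Rightarrow> real \<Rightarrow> real \<Rightarrow> real \<Rightarrow> real" where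
  "gamma c0 c1 c2 \<delta> \<sigma> \<epsilon> lm t =
     (let a = phase c0 lm t in
       c0 t - \<epsilon> * sin (2 * a) - \<epsilon>\<^sup>2 / 4 * (sin a ^ 4 / c0 t)
       - 5 / (16 * lm\<^sup>2) * (c1 t / c0 t)\<^sup>2
       + \<epsilon> / (2 * lm) * (c1 t / c0 t powr (3/2)) * (sin a)\<^sup>2
       + 1 / (4 * lm\<^sup>2) * (c2 t / c0 t)
       + \<delta>\<^sup>2 / lm powr (2 - 4 * \<sigma>))"

end

theory Submission
  imports Defs
begin

lemma at_within_nonneg:
  fixes t T :: real
  assumes "0 \<le> t" "t < T"
  shows "at t within {0..T} = at t within {0..}"
  by (rule at_within_nhd[where S="{t - 1 <..< T}"]) (use assms in auto)

lemma ftc_nonneg: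
  assumes "continuous_on {0..} f" "0 \<le> (t::real)"
  shows "((\<lambda>x. integral {0..x} f) has_real_derivative f t) (at t within {0..})"
proof -
  have "continuous_on {0..t+1} f" using assms(1) by (rule continuous_on_subset) auto
  from integral_has_real_derivative[OF this, of t] assms(2)
  show ?thesis using at_within_nonneg[of t "t+1"] assms(2) by auto
qed

lemma deriv_nonneg_mono:
  fixes f f' :: "real \<Rightarrow> real"
  assumes d: "\<And>t. t \<ge> 0 \<Longrightarrow> (f has_real_derivative f' t) (at t within {0..})"
    and p: "\<And>t. t \<ge> 0 \<Longrightarrow> f' t \<ge> 0"
    and st: "0 \<le> s" "s \<le> t"
  shows "f s \<le> f t"
proof (rule DERIV_nonneg_imp_increasing_open[OF st(2)])
  fix x assume x: "s < x" "x < t"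
  then have "x \<in> interior {0::real..}" using st by auto
  then have "at x within {0..} = at x" by (rule at_within_interior)
  then show "\<exists>y. DERIV f x :> y \<and> 0 \<le> y" using d[of x] p[of x] x st by auto
next
  have "continuous_on {0..} f" by (rule DERIV_continuous_on) (use d in auto)
  then show "continuous_on {s..t} f" by (rule continuous_on_subset) (use st in auto)
qed

lemma deriv_lip:
  fixes f f' :: "real \<Rightarrow> real"
  assumes d: "\<And>t. t \<ge> 0 \<Longrightarrow> (f has_real_derivative f' t) (at t within {0..})"
    and b: "\<And>t. t \<ge> 0 \<Longrightarrow> \<bar>f' t\<bar> \<le> L"
    and st: "0 \<le> s" "0 \<le> t"
  shows "\<bar>f t - f s\<bar> \<le> L * \<bar>t - s\<bar>"
proof -
  have *: "\<bar>f y - f x\<bar> \<le> L * (y - x)" if xy: "0 \<le> x" "x \<le> y" for x y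
  proof -
    have d1: "((\<lambda>t. L * t - f t) has_real_derivative L - f' t) (at t within {0..})" if "t \<ge> 0" for t
      using d[OF that] by (auto intro!: derivative_eq_intros)
    have d2: "((\<lambda>t. L * t + f t) has_real_derivative L + f' t) (at t within {0..})" if "t \<ge> 0" for t
      using d[OF that] by (auto intro!: derivative_eq_intros)
    have "(\<lambda>t. L * t - f t) x \<le> (\<lambda>t. L * t - f t) y"
      by (rule deriv_nonneg_mono[OF d1]) (use xy b in \<open>force simp: abs_le_iff\<close>)+
    moreover have "(\<lambda>t. L * t + f t) x \<le> (\<lambda>t. L * t + f t) y"
      by (rule deriv_nonneg_mono[OF d2]) (use xy b in \<open>force simp: abs_le_iff\<close>)+
    ultimately show ?thesis by (auto simp: algebra_simps abs_le_iff)
  qed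
  show ?thesis
  proof (cases "s \<le> t")
    case True then show ?thesis using *[of s t] st by auto
  next
    case False then show ?thesis using *[of t s] st by (auto simp: abs_minus_commute)
  qed
qed

locale setting =
  fixes \<mu>1 \<mu>2 M :: real and c0 c1 c2 c3 :: "real \<Rightarrow> real"
  assumes mu1: "0 < \<mu>1" and mu12: "\<mu>1 < \<mu>2"
    and d1: "\<And>t. t \<ge> 0 \<Longrightarrow> (c0 has_real_derivative c1 t) (at t within {0..})"
    and d2: "\<And>t. t \<ge> 0 \<Longrightarrow> (c1 has_real_derivative c2 t) (at t within {0..})"
    and d3: "\<And>t. t \<ge> 0 \<Longrightarrow> (c2 has_real_derivative c3 t) (at t within {0..})"
    and cb: "\<And>t. t \<ge> 0 \<Longrightarrow> \<mu>1 \<le> c0 t \<and> c0 t \<le> \<mu>2"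
    and Mb: "\<And>t. t \<ge> 0 \<Longrightarrow> \<bar>c1 t\<bar> + \<bar>c2 t\<bar> + \<bar>c3 t\<bar> \<le> M"
begin

lemma M_nonneg: "0 \<le> M" using Mb[of 0] by auto
lemma c1b: "t \<ge> 0 \<Longrightarrow> \<bar>c1 t\<bar> \<le> M" using Mb[of t] by auto
lemma c2b: "t \<ge> 0 \<Longrightarrow> \<bar>c2 t\<bar> \<le> M" using Mb[of t] by auto
lemma c3b: "t \<ge> 0 \<Longrightarrow> \<bar>c3 t\<bar> \<le> M" using Mb[of t] by auto
lemma c0pos: "t \<ge> 0 \<Longrightarrow> 0 < c0 t" using cb[of t] mu1 by auto
lemma mu2: "0 < \<mu>2" using mu1 mu12 by auto

lemma cont0: "continuous_on {0..} c0" by (rule DERIV_continuous_on) (use d1 in auto)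
lemma cont1: "continuous_on {0..} c1" by (rule DERIV_continuous_on) (use d2 in auto)
lemma cont2: "continuous_on {0..} c2" by (rule DERIV_continuous_on) (use d3 in auto)

lemma cont_s: "continuous_on {0..} (\<lambda>t. sqrt (c0 t))"
  by (intro continuous_intros cont0)

lemma deriv_s: "t \<ge> 0 \<Longrightarrow> ((\<lambda>t. sqrt (c0 t)) has_real_derivative c1 t / (2 * sqrt (c0 t))) (at t within {0..})"
  using c0pos[of t] d1[of t]
  by (auto intro!: derivative_eq_intros simp: field_simps)

lemma deriv_phase: "t \<ge> 0 \<Longrightarrow> (phase c0 lm has_real_derivative lm * sqrt (c0 t)) (at t within {0..})"
  unfolding phase_def by (auto intro!: derivative_eq_intros ftc_nonneg cont_s)

lemma cont_phase: "continuous_on {0..} (phase c0 lm)"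
  by (rule DERIV_continuous_on) (use deriv_phase in auto)

lemma phase0: "phase c0 lm 0 = 0" by (simp add: phase_def)

end

context setting begin

definition gam :: "real \<Rightarrow> real \<Rightarrow> real \<Rightarrow> real \<Rightarrow> real" where
 "gam lm ep Dm t = (let a = phase c0 lm t in c0 t - ep * sin (2*a) - ep\<^sup>2/4*(sin a^4/c0 t)
    - 5/(16*lm\<^sup>2)*(c1 t/c0 t)\<^sup>2 + ep/(2*lm)*(c1 t/c0 t powr (3/2))*(sin a)\<^sup>2
    + 1/(4*lm\<^sup>2)*(c2 t/c0 t) + Dm\<^sup>2/lm\<^sup>2)"

lemma gamma_gam:
  assumes "lm > 0"
  shows "gamma c0 c1 c2 \<delta> \<sigma> ep lm t = gam lm ep (\<delta> * lm powr (2*\<sigma>)) t"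
proof -
  have e1: "lm powr (2 - 4*\<sigma>) = lm powr 2 / lm powr (4*\<sigma>)" by (rule powr_diff)
  have e2: "lm powr 2 = lm\<^sup>2" using assms by simp
  have e3: "(lm powr (2*\<sigma>))\<^sup>2 = lm powr (4*\<sigma>)"
    by (simp add: power2_eq_square powr_add[symmetric])
  have "lm powr (2 - 4*\<sigma>) = lm\<^sup>2 / (lm powr (2*\<sigma>))\<^sup>2" using e1 e2 e3 by simp
  then have "\<delta>\<^sup>2 / lm powr (2 - 4 * \<sigma>) = (\<delta> * lm powr (2*\<sigma>))\<^sup>2 / lm\<^sup>2"
    using assms by (simp add: power_mult_distrib)
  then show ?thesis unfolding gamma_def gam_def Let_def by simp
qed

lemma explicit_solution:
  fixes lm ep Dm :: real
  assumes lm: "lm > 0" and ep: "ep > 0" and Dm: "Dm \<ge> 0"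
  defines "s \<equiv> \<lambda>t. sqrt (c0 t)"
  defines "a \<equiv> phase c0 lm"
  defines "th \<equiv> \<lambda>t. integral {0..t} (\<lambda>\<tau>. ep*lm/2 * sin (a \<tau>)^2 / s \<tau>)"
  defines "h \<equiv> \<lambda>t. ep*lm/2 * sin (a t)^2 / s t - Dm - c1 t / (4 * c0 t)"
  defines "P \<equiv> \<lambda>t. exp (th t - Dm * t - ln (c0 t) / 4)"
  defines "K \<equiv> 1 / (lm * P 0 * s 0)"
  defines "W \<equiv> \<lambda>t. K * P t * sin (a t)"
  defines "V \<equiv> \<lambda>t. K * P t * (h t * sin (a t) + lm * s t * cos (a t))"
  shows "\<And>t. t \<ge> 0 \<Longrightarrow> (W has_real_derivative V t) (at t within {0..})"
    and "\<And>t. t \<ge> 0 \<Longrightarrow> (V has_real_derivative (-2 * Dm * V t - lm\<^sup>2 * gam lm ep Dm t * W t)) (at t within {0..})"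
    and "W 0 = 0" "V 0 = 1"
proof -
  have sp: "t \<ge> 0 \<Longrightarrow> s t > 0" for t using c0pos unfolding s_def by auto
  have ds: "t \<ge> 0 \<Longrightarrow> (s has_real_derivative c1 t / (2 * s t)) (at t within {0..})" for t
    unfolding s_def by (rule deriv_s)
  have da: "t \<ge> 0 \<Longrightarrow> (a has_real_derivative lm * s t) (at t within {0..})" for t
    unfolding s_def a_def by (rule deriv_phase)
  have conta: "continuous_on {0..} a" unfolding a_def by (rule cont_phase)
  have dth: "t \<ge> 0 \<Longrightarrow> (th has_real_derivative ep*lm/2 * sin (a t)^2 / s t) (at t within {0..})" for t
    unfolding th_def
    by (rule ftc_nonneg) (use sp c0pos in \<open>force intro!: continuous_intros conta cont_s simp: s_def\<close>)
  have dP: "(P has_real_derivative P t * h t) (at t within {0..})" if "t \<ge> 0" for t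
    unfolding P_def h_def using that c0pos[OF that] dth[OF that] d1[OF that]
    by (auto intro!: derivative_eq_intros simp: field_simps)
  show dW: "(W has_real_derivative V t) (at t within {0..})" if "t \<ge> 0" for t
  proof -
    have "((\<lambda>t. K * P t * sin (a t)) has_real_derivative K * (P t * h t) * sin (a t) + K * P t * (cos (a t) * (lm * s t))) (at t within {0..})"
      apply (rule derivative_eq_intros refl dP[OF that] da[OF that])+
      by (simp add: algebra_simps)
    then show ?thesis unfolding W_def V_def by (simp add: algebra_simps)
  qed
  define hd where "hd = (\<lambda>t. ep*lm/2 * (2 * sin (a t) * cos (a t) * lm - sin (a t)^2 * c1 t / (2 * c0 t * s t))
      - (c2 t * c0 t - c1 t * c1 t) / (4 * (c0 t)^2))"
  have dh: "(h has_real_derivative hd t) (at t within {0..})" if "t \<ge> 0" for t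
  proof -
    have s2: "s t * s t = c0 t" using c0pos[OF that] unfolding s_def by (simp add: real_sqrt_mult[symmetric])
    show ?thesis
    unfolding h_def hd_def using da[OF that] ds[OF that] d1[OF that] d2[OF that] sp[OF that] c0pos[OF that]
    apply (auto intro!: derivative_eq_intros)
    apply (simp add: field_simps)
    apply (simp only: s2[symmetric])
    by algebra
  qed
  show "(V has_real_derivative (-2 * Dm * V t - lm\<^sup>2 * gam lm ep Dm t * W t)) (at t within {0..})" if "t \<ge> 0" for t
  proof -
    have s2: "s t * s t = c0 t" using c0pos[OF that] unfolding s_def by (simp add: real_sqrt_mult[symmetric])
    have p32: "c0 t powr (3/2) = c0 t * s t"
    proof -
      have "c0 t powr (1 + 1/2) = c0 t powr 1 * c0 t powr (1/2)" by (rule powr_add)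
      then have "c0 t powr (3/2) = c0 t * c0 t powr (1/2)" using c0pos[OF that] by (simp add: numeral_eq_Suc)
      then show ?thesis using c0pos[OF that] by (simp add: s_def powr_half_sqrt)
    qed
    have g: "gam lm ep Dm t = c0 t - ep * (2 * sin (a t) * cos (a t)) - ep\<^sup>2/4*(sin (a t)^4/c0 t)
    - 5/(16*lm\<^sup>2)*(c1 t/c0 t)\<^sup>2 + ep/(2*lm)*(c1 t/(c0 t * s t))*(sin (a t))\<^sup>2
    + 1/(4*lm\<^sup>2)*(c2 t/c0 t) + Dm\<^sup>2/lm\<^sup>2"
      unfolding gam_def Let_def a_def[symmetric] p32 sin_double by simp
    have "(V has_real_derivative K * (P t * h t) * (h t * sin (a t) + lm * s t * cos (a t))
       + K * P t * (hd t * sin (a t) + h t * (cos (a t) * (lm * s t)) + lm * (c1 t / (2 * s t)) * cos (a t)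
           + lm * s t * (- sin (a t) * (lm * s t)))) (at t within {0..})"
      unfolding V_def
      apply (rule dP[OF that] dh[OF that] da[OF that] ds[OF that] derivative_eq_intros refl)+
      by (simp add: algebra_simps)
    moreover have "K * (P t * h t) * (h t * sin (a t) + lm * s t * cos (a t))
       + K * P t * (hd t * sin (a t) + h t * (cos (a t) * (lm * s t)) + lm * (c1 t / (2 * s t)) * cos (a t)
           + lm * s t * (- sin (a t) * (lm * s t))) = -2 * Dm * V t - lm\<^sup>2 * gam lm ep Dm t * W t"
      unfolding g V_def W_def h_def hd_def using sp[OF that] c0pos[OF that] lm
      apply (simp add: field_simps)
      apply (simp only: s2[symmetric])
      by algebra
    ultimately show ?thesis by simp
  qed
  show "W 0 = 0" unfolding W_def a_def by (simp add: phase0)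
  show "V 0 = 1" unfolding V_def K_def a_def using sp[of 0] lm
    by (simp add: phase0 field_simps P_def)
qed

end

lemma ode_unique:
  fixes u ud q :: "real \<Rightarrow> real" and c Q :: real
  assumes c: "c \<ge> 0" and Q: "\<And>t. t \<ge> 0 \<Longrightarrow> \<bar>q t\<bar> \<le> Q"
    and du: "\<And>t. t \<ge> 0 \<Longrightarrow> (u has_real_derivative ud t) (at t within {0..})"
    and dud: "\<And>t. t \<ge> 0 \<Longrightarrow> (ud has_real_derivative (- c * ud t - q t * u t)) (at t within {0..})"
    and i: "u 0 = 0" "ud 0 = 0"
    and t: "t \<ge> 0"
  shows "u t = 0 \<and> ud t = 0"
proof -
  define C where "C = 1 + Q"
  define F where "F = (\<lambda>t. exp (- C * t) * ((ud t)\<^sup>2 + (u t)\<^sup>2))"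
  have dF: "((\<lambda>t. - F t) has_real_derivative
      - (exp (- C * t) * (- C) * ((ud t)\<^sup>2 + (u t)\<^sup>2) + exp (- C * t) * (2 * ud t * (- c * ud t - q t * u t) + 2 * u t * ud t)))
      (at t within {0..})" if "t \<ge> 0" for t
    unfolding F_def
    apply (rule du[OF that] dud[OF that] derivative_eq_intros refl)+
    by (simp add: algebra_simps)
  have nn: "0 \<le> - (exp (- C * t) * (- C) * ((ud t)\<^sup>2 + (u t)\<^sup>2) + exp (- C * t) * (2 * ud t * (- c * ud t - q t * u t) + 2 * u t * ud t))"
    if "t \<ge> 0" for t
  proof -
    have a1: "2 * \<bar>u t * ud t\<bar> \<le> (ud t)\<^sup>2 + (u t)\<^sup>2"
    proof -
      have "0 \<le> (\<bar>u t\<bar> - \<bar>ud t\<bar>)\<^sup>2" by simp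
      then show ?thesis by (simp add: power2_diff abs_mult)
    qed
    have a2: "(1 - q t) * (u t * ud t) \<le> \<bar>1 - q t\<bar> * \<bar>u t * ud t\<bar>"
      by (metis abs_ge_self abs_mult)
    have a3: "\<bar>1 - q t\<bar> \<le> C" using Q[OF that] unfolding C_def by auto
    have a4: "2 * ud t * (- c * ud t - q t * u t) + 2 * u t * ud t = - 2 * c * (ud t)\<^sup>2 + 2 * ((1 - q t) * (u t * ud t))"
      by (simp add: algebra_simps power2_eq_square)
    have "2 * ((1 - q t) * (u t * ud t)) \<le> C * ((ud t)\<^sup>2 + (u t)\<^sup>2)"
    proof -
      have "2 * ((1 - q t) * (u t * ud t)) \<le> \<bar>1 - q t\<bar> * (2 * \<bar>u t * ud t\<bar>)" using a2 by linarith
      also have "\<dots> \<le> C * ((ud t)\<^sup>2 + (u t)\<^sup>2)" by (rule mult_mono[OF a3 a1]) (use a3 in auto)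
      finally show ?thesis .
    qed
    moreover have "0 \<le> c * (ud t)\<^sup>2" using c by simp
    ultimately have "2 * ud t * (- c * ud t - q t * u t) + 2 * u t * ud t - C * ((ud t)\<^sup>2 + (u t)\<^sup>2) \<le> 0"
      unfolding a4 by linarith
    then have "exp (- C * t) * (2 * ud t * (- c * ud t - q t * u t) + 2 * u t * ud t - C * ((ud t)\<^sup>2 + (u t)\<^sup>2)) \<le> 0"
      by (simp add: mult_nonneg_nonpos)
    then show ?thesis by (simp add: algebra_simps)
  qed
  have "- F 0 \<le> - F t" by (rule deriv_nonneg_mono[OF dF nn]) (use t in auto)
  then have "F t \<le> 0" unfolding F_def using i by simp
  then have "(ud t)\<^sup>2 + (u t)\<^sup>2 \<le> 0" unfolding F_def by (simp add: mult_le_0_iff)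
  then show ?thesis by (smt (verit) zero_le_power2 zero_eq_power2)
qed

context setting begin

definition Bnd :: "real \<Rightarrow> real \<Rightarrow> real \<Rightarrow> real" where
  "Bnd lm ep Dm = ep + ep\<^sup>2/(4*\<mu>1) + 5*M\<^sup>2/(16*lm\<^sup>2*\<mu>1\<^sup>2) + ep*M/(2*lm*(\<mu>1 * sqrt \<mu>1))
     + M/(4*lm\<^sup>2*\<mu>1) + Dm\<^sup>2/lm\<^sup>2"

lemma c0_powr32: "t \<ge> 0 \<Longrightarrow> c0 t powr (3/2) = c0 t * sqrt (c0 t)"
proof -
  assume t: "t \<ge> 0"
  have "c0 t powr (1 + 1/2) = c0 t powr 1 * c0 t powr (1/2)" by (rule powr_add)
  then show ?thesis using c0pos[OF t] by (simp add: numeral_eq_Suc powr_half_sqrt)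
qed

lemma gam_bound:
  assumes lm: "lm > 0" and ep: "ep \<ge> 0" and t: "t \<ge> 0"
  shows "\<bar>gam lm ep Dm t - c0 t\<bar> \<le> Bnd lm ep Dm"
proof -
  define x where "x = sin (phase c0 lm t)"
  have x1: "\<bar>x\<bar> \<le> 1" unfolding x_def by simp
  have c0t: "\<mu>1 \<le> c0 t" "c0 t > 0" using cb[OF t] c0pos[OF t] by auto
  have s1: "\<mu>1 * sqrt \<mu>1 \<le> c0 t * sqrt (c0 t)"
    using c0t mu1 by (intro mult_mono) auto
  have sq: "0 < \<mu>1 * sqrt \<mu>1" using mu1 by simp
  have b1: "\<bar>ep * sin (2 * phase c0 lm t)\<bar> \<le> ep" using ep by (simp add: abs_mult mult_left_le)
  have b2: "\<bar>ep\<^sup>2/4*(x^4/c0 t)\<bar> \<le> ep\<^sup>2/(4*\<mu>1)"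
  proof -
    have "x^4 \<le> 1" using x1 by (simp add: abs_le_iff power_le_one_iff) (smt (verit) abs_le_iff power_le_one power2_abs abs_ge_zero power_abs)
    then have "x^4/c0 t \<le> 1/\<mu>1" using c0t mu1 by (intro frac_le) auto
    then have "ep\<^sup>2/4*(x^4/c0 t) \<le> ep\<^sup>2/4*(1/\<mu>1)" by (rule mult_left_mono) auto
    moreover have "0 \<le> ep\<^sup>2/4*(x^4/c0 t)" using c0t by (simp add: zero_le_even_power)
    ultimately show ?thesis by simp
  qed
  have b3: "\<bar>5/(16*lm\<^sup>2)*(c1 t/c0 t)\<^sup>2\<bar> \<le> 5*M\<^sup>2/(16*lm\<^sup>2*\<mu>1\<^sup>2)"
  proof -
    have "\<bar>c1 t/c0 t\<bar> \<le> M/\<mu>1" using c1b[OF t] c0t mu1 M_nonneg by (simp add: abs_div) (intro frac_le, auto)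
    then have "(c1 t/c0 t)\<^sup>2 \<le> (M/\<mu>1)\<^sup>2" by (metis abs_ge_zero power2_abs power_mono)
    then have "5/(16*lm\<^sup>2)*(c1 t/c0 t)\<^sup>2 \<le> 5/(16*lm\<^sup>2)*(M/\<mu>1)\<^sup>2" by (rule mult_left_mono) auto
    moreover have "5/(16*lm\<^sup>2)*(M/\<mu>1)\<^sup>2 = 5*M\<^sup>2/(16*lm\<^sup>2*\<mu>1\<^sup>2)" by (simp add: power_divide)
    ultimately show ?thesis by simp
  qed
  have b4: "\<bar>ep/(2*lm)*(c1 t/c0 t powr (3/2))*x\<^sup>2\<bar> \<le> ep*M/(2*lm*(\<mu>1 * sqrt \<mu>1))"
  proof -
    have "\<bar>c1 t/c0 t powr (3/2)\<bar> \<le> M/(\<mu>1 * sqrt \<mu>1)"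
      unfolding c0_powr32[OF t] using c1b[OF t] c0t s1 sq M_nonneg
      by (simp add: abs_div abs_mult) (intro frac_le, auto)
    moreover have "x\<^sup>2 \<le> 1" using x1 by (simp add: abs_square_le_1)
    ultimately have "\<bar>c1 t/c0 t powr (3/2)\<bar> * x\<^sup>2 \<le> M/(\<mu>1 * sqrt \<mu>1)"
      using mult_left_le[of "x\<^sup>2" "\<bar>c1 t/c0 t powr (3/2)\<bar>"] by simp
    then have "ep/(2*lm) * (\<bar>c1 t/c0 t powr (3/2)\<bar> * x\<^sup>2) \<le> ep/(2*lm) * (M/(\<mu>1 * sqrt \<mu>1))"
      by (rule mult_left_mono) (use lm ep in auto)
    moreover have "\<bar>ep/(2*lm)*(c1 t/c0 t powr (3/2))*x\<^sup>2\<bar> = ep/(2*lm) * (\<bar>c1 t/c0 t powr (3/2)\<bar> * x\<^sup>2)"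
      using lm ep by (simp add: abs_mult)
    ultimately show ?thesis by simp
  qed
  have b5: "\<bar>1/(4*lm\<^sup>2)*(c2 t/c0 t)\<bar> \<le> M/(4*lm\<^sup>2*\<mu>1)"
  proof -
    have "\<bar>c2 t/c0 t\<bar> \<le> M/\<mu>1" using c2b[OF t] c0t mu1 M_nonneg by (simp add: abs_div) (intro frac_le, auto)
    then have "1/(4*lm\<^sup>2)*\<bar>c2 t/c0 t\<bar> \<le> 1/(4*lm\<^sup>2)*(M/\<mu>1)" by (rule mult_left_mono) auto
    then show ?thesis by (simp add: abs_mult)
  qed
  have b6: "\<bar>Dm\<^sup>2/lm\<^sup>2\<bar> = Dm\<^sup>2/lm\<^sup>2" by simp
  have "gam lm ep Dm t - c0 t = - (ep * sin (2 * phase c0 lm t)) - ep\<^sup>2/4*(x^4/c0 t)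
    - 5/(16*lm\<^sup>2)*(c1 t/c0 t)\<^sup>2 + ep/(2*lm)*(c1 t/c0 t powr (3/2))*x\<^sup>2
    + 1/(4*lm\<^sup>2)*(c2 t/c0 t) + Dm\<^sup>2/lm\<^sup>2"
    unfolding gam_def Let_def x_def by simp
  then show ?thesis unfolding Bnd_def using b1 b2 b3 b4 b5 b6 by linarith
qed

end

lemma e4: "(exp (- ln c / 4))\<^sup>2 = 1 / sqrt c" if "c > 0" for c :: real
proof -
  have "(exp (- ln c / 4))\<^sup>2 = exp (- ln c / 4 + - ln c / 4)" by (simp only: exp_add power2_eq_square)
  also have "- ln c / 4 + - ln c / 4 = - (ln c / 2)" by simp
  finally have 1: "(exp (- ln c / 4))\<^sup>2 = exp (- (ln c / 2))" .
  have "(exp (ln c / 2))\<^sup>2 = exp (ln c / 2 + ln c / 2)" by (simp only: exp_add power2_eq_square)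
  also have "\<dots> = c" using that by simp
  finally have 2: "sqrt c = exp (ln c / 2)" by (intro real_sqrt_unique) auto
  show ?thesis unfolding 1 2 exp_minus by (simp add: inverse_eq_divide)
qed

context setting begin

lemma growth:
  fixes lm ep Dm :: real and w wd :: "real \<Rightarrow> real"
  assumes lm: "lm > 0" and ep: "ep > 0" and Dm: "Dm \<ge> 0"
    and A: "(ep*lm/(2* sqrt \<mu>1) + Dm + M/(4*\<mu>1))\<^sup>2 \<le> lm\<^sup>2/2"
    and B: "M \<le> lm*(\<mu>1* sqrt \<mu>1)"
    and C: "ep/(2* sqrt \<mu>1* sqrt \<mu>2) \<le> ln (\<mu>2/\<mu>1)"
    and wi: "w 0 = 0" "wd 0 = 1"
    and dw: "\<And>t. t \<ge> 0 \<Longrightarrow> (w has_real_derivative wd t) (at t within {0..})"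
    and dwd: "\<And>t. t \<ge> 0 \<Longrightarrow> (wd has_real_derivative (- 2 * Dm * wd t - lm\<^sup>2 * gam lm ep Dm t * w t)) (at t within {0..})"
    and t: "t \<ge> 0"
  shows "(wd t)\<^sup>2 + lm\<^sup>2 * (w t)\<^sup>2 \<ge> (\<mu>1 * min 1 \<mu>1 / (2 * \<mu>2\<^sup>2)) * exp ((1 / (4 * sqrt \<mu>2)) * ep * lm * t - 2 * Dm * t)"
proof -
  define s where "s \<equiv> \<lambda>t. sqrt (c0 t)"
  define a where "a \<equiv> phase c0 lm"
  define th where "th \<equiv> \<lambda>t. integral {0..t} (\<lambda>\<tau>. ep*lm/2 * sin (a \<tau>)^2 / s \<tau>)"
  define h where "h \<equiv> \<lambda>t. ep*lm/2 * sin (a t)^2 / s t - Dm - c1 t / (4 * c0 t)"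
  define P where "P \<equiv> \<lambda>t. exp (th t - Dm * t - ln (c0 t) / 4)"
  define K where "K \<equiv> 1 / (lm * P 0 * s 0)"
  define W where "W \<equiv> \<lambda>t. K * P t * sin (a t)"
  define V where "V \<equiv> \<lambda>t. K * P t * (h t * sin (a t) + lm * s t * cos (a t))"
  have ES1: "(W has_real_derivative V t) (at t within {0..})" if "t \<ge> 0" for t
    unfolding W_def V_def K_def P_def h_def th_def a_def s_def by (rule explicit_solution(1)[OF lm ep Dm that])
  have ES2: "(V has_real_derivative (-2 * Dm * V t - lm\<^sup>2 * gam lm ep Dm t * W t)) (at t within {0..})" if "t \<ge> 0" for t
    unfolding W_def V_def K_def P_def h_def th_def a_def s_def by (rule explicit_solution(2)[OF lm ep Dm that])
  have ES3: "W 0 = 0" "V 0 = 1"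
    unfolding W_def V_def K_def P_def h_def th_def a_def s_def by (rule explicit_solution(3,4)[OF lm ep Dm])+
  note ES = ES1 ES2 ES3
  have uq: "w t = W t \<and> wd t = V t"
  proof -
    have "(\<lambda>t. w t - W t) t = 0 \<and> (\<lambda>t. wd t - V t) t = 0"
    proof (rule ode_unique[where u="\<lambda>t. w t - W t" and ud="\<lambda>t. wd t - V t" and c="2*Dm" and q="\<lambda>t. lm\<^sup>2 * gam lm ep Dm t" and Q="lm\<^sup>2 * (\<mu>2 + Bnd lm ep Dm)"])
      show "\<bar>lm\<^sup>2 * gam lm ep Dm x\<bar> \<le> lm\<^sup>2 * (\<mu>2 + Bnd lm ep Dm)" if "x \<ge> 0" for x
      proof -
        have "\<bar>gam lm ep Dm x\<bar> \<le> \<mu>2 + Bnd lm ep Dm"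
          using gam_bound[OF lm _ that, of ep Dm] ep cb[OF that] c0pos[OF that] by linarith
        then show ?thesis by (simp add: abs_mult mult_left_mono)
      qed
      show "((\<lambda>t. w t - W t) has_real_derivative wd x - V x) (at x within {0..})" if "x \<ge> 0" for x
        using dw[OF that] ES(1)[OF that] by (rule DERIV_diff)
      show "((\<lambda>t. wd t - V t) has_real_derivative - (2 * Dm) * (wd x - V x) - lm\<^sup>2 * gam lm ep Dm x * (w x - W x))
          (at x within {0..})" if "x \<ge> 0" for x
        using DERIV_diff[OF dwd[OF that] ES(2)[OF that]] by (simp add: algebra_simps)
    qed (use Dm wi ES(3,4) t in auto)
    then show ?thesis by simp
  qed
  have sp: "x \<ge> 0 \<Longrightarrow> s x > 0" for x using c0pos unfolding s_def by auto
  have s2: "s x * s x = c0 x" if "x \<ge> 0" for x using c0pos[OF that] unfolding s_def by (simp add: real_sqrt_mult[symmetric])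
  have sle: "x \<ge> 0 \<Longrightarrow> s x \<le> sqrt \<mu>2" for x using cb unfolding s_def by auto
  have sge: "x \<ge> 0 \<Longrightarrow> sqrt \<mu>1 \<le> s x" for x using cb unfolding s_def by auto
  have ds: "x \<ge> 0 \<Longrightarrow> (s has_real_derivative c1 x / (2 * s x)) (at x within {0..})" for x
    unfolding s_def by (rule deriv_s)
  have da: "x \<ge> 0 \<Longrightarrow> (a has_real_derivative lm * s x) (at x within {0..})" for x
    unfolding s_def a_def by (rule deriv_phase)
  have conta: "continuous_on {0..} a" unfolding a_def by (rule cont_phase)
  have dth: "x \<ge> 0 \<Longrightarrow> (th has_real_derivative ep*lm/2 * sin (a x)^2 / s x) (at x within {0..})" for x
    unfolding th_def
    by (rule ftc_nonneg) (use sp c0pos in \<open>force intro!: continuous_intros conta cont_s simp: s_def\<close>)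
  define \<kappa> where "\<kappa> = ep * lm / (2 * sqrt \<mu>2)"
  have kap: "\<kappa> > 0" unfolding \<kappa>_def using ep lm mu2 by auto
  define \<psi> where "\<psi> = (\<lambda>x. x/4 - sin (a x) * cos (a x) / (2 * lm * s x))"
  define \<psi>d where "\<psi>d = (\<lambda>x. 1/4 - ((cos (a x))\<^sup>2 - (sin (a x))\<^sup>2) / 2 + sin (a x) * cos (a x) * c1 x / (4 * lm * (s x * s x * s x)))"
  have dpsi: "(\<psi> has_real_derivative \<psi>d x) (at x within {0..})" if "x \<ge> 0" for x
    unfolding \<psi>_def \<psi>d_def using da[OF that] ds[OF that] sp[OF that] lm
    apply (auto intro!: derivative_eq_intros)
    by (simp add: field_simps power2_eq_square)
  have psid_le: "\<psi>d x \<le> (sin (a x))\<^sup>2" if "x \<ge> 0" for x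
  proof -
    have s3: "\<mu>1 * sqrt \<mu>1 \<le> s x * s x * s x"
      using s2[OF that] sge[OF that] cb[OF that] mu1 by (simp add: mult_mono)
    have "\<bar>sin (a x) * cos (a x) * c1 x\<bar> \<le> M"
    proof -
      have "\<bar>sin (a x)\<bar> * \<bar>cos (a x)\<bar> \<le> 1 * 1" by (intro mult_mono) auto
      then have "\<bar>sin (a x)\<bar> * \<bar>cos (a x)\<bar> * \<bar>c1 x\<bar> \<le> 1 * M"
        by (intro mult_mono c1b[OF that]) auto
      then show ?thesis by (simp add: abs_mult)
    qed
    also have "\<dots> \<le> lm * (s x * s x * s x)" using B mult_left_mono[OF s3, of lm] lm by linarith
    finally have "sin (a x) * cos (a x) * c1 x / (4 * lm * (s x * s x * s x)) \<le> 1/4"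
      using lm sp[OF that] by (simp add: divide_le_eq abs_le_iff)
    moreover have "\<psi>d x = (sin (a x))\<^sup>2 - 1/4 + sin (a x) * cos (a x) * c1 x / (4 * lm * (s x * s x * s x))"
      unfolding \<psi>d_def cos_squared_eq by (simp add: field_simps)
    ultimately show ?thesis by linarith
  qed
  have G: "th 0 - \<kappa> * \<psi> 0 \<le> th t - \<kappa> * \<psi> t"
  proof (rule deriv_nonneg_mono[where f="\<lambda>x. th x - \<kappa> * \<psi> x" and f'="\<lambda>x. ep*lm/2 * sin (a x)^2 / s x - \<kappa> * \<psi>d x"])
    show "((\<lambda>x. th x - \<kappa> * \<psi> x) has_real_derivative ep*lm/2 * sin (a x)^2 / s x - \<kappa> * \<psi>d x) (at x within {0..})"
      if "x \<ge> 0" for x using dpsi[OF that] dth[OF that] by (auto intro!: derivative_eq_intros)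
    show "0 \<le> ep*lm/2 * sin (a x)^2 / s x - \<kappa> * \<psi>d x" if "x \<ge> 0" for x
    proof -
      have "\<kappa> * \<psi>d x \<le> \<kappa> * (sin (a x))\<^sup>2" using psid_le[OF that] kap by (simp add: mult_left_mono)
      also have "\<dots> \<le> ep*lm/2 * sin (a x)^2 / s x"
      proof -
        have "ep*lm/2 / sqrt \<mu>2 \<le> ep*lm/2 / s x"
          using sle[OF that] sp[OF that] ep lm mu2 by (intro divide_left_mono) auto
        then have "ep*lm/2 / sqrt \<mu>2 * (sin (a x))\<^sup>2 \<le> ep*lm/2 / s x * (sin (a x))\<^sup>2"
          by (rule mult_right_mono) simp
        then show ?thesis unfolding \<kappa>_def by simp
      qed
      finally show ?thesis by linarith
    qed
  qed (use t in auto)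
  have psi0: "\<psi> 0 = 0" unfolding \<psi>_def a_def by (simp add: phase0)
  have th0: "th 0 = 0" unfolding th_def by simp
  have psit: "t/4 - 1/(2 * lm * sqrt \<mu>1) \<le> \<psi> t"
  proof -
    have "\<bar>sin (a t) * cos (a t)\<bar> \<le> 1"
    proof -
      have "\<bar>sin (a t)\<bar> * \<bar>cos (a t)\<bar> \<le> 1 * 1" by (intro mult_mono) auto
      then show ?thesis by (simp add: abs_mult)
    qed
    moreover have "2 * lm * sqrt \<mu>1 \<le> 2 * lm * s t" using sge[OF t] lm by simp
    moreover have "0 < 2 * lm * sqrt \<mu>1" using lm mu1 by simp
    ultimately have "sin (a t) * cos (a t) / (2 * lm * s t) \<le> 1/(2 * lm * sqrt \<mu>1)"
      by (intro frac_le) (auto simp: abs_le_iff)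
    then show ?thesis unfolding \<psi>_def by simp
  qed
  have th_lb: "(1 / (4 * sqrt \<mu>2)) * ep * lm * t - ln (\<mu>2/\<mu>1) \<le> 2 * th t"
  proof -
    have "\<kappa> * (t/4 - 1/(2 * lm * sqrt \<mu>1)) \<le> th t"
    proof -
      have "\<kappa> * (t/4 - 1/(2 * lm * sqrt \<mu>1)) \<le> \<kappa> * \<psi> t"
        by (rule mult_left_mono[OF psit]) (use kap in simp)
      then show ?thesis using G psi0 th0 by simp
    qed
    moreover have "2 * (\<kappa> * (t/4 - 1/(2 * lm * sqrt \<mu>1))) = (1 / (4 * sqrt \<mu>2)) * ep * lm * t - ep/(2 * sqrt \<mu>1 * sqrt \<mu>2)"
      unfolding \<kappa>_def using lm mu1 mu2 by (simp add: field_simps)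
    ultimately show ?thesis using C by linarith
  qed
  define x where "x = sin (a t)"
  define y where "y = cos (a t)"
  have xy: "x\<^sup>2 + y\<^sup>2 = 1" unfolding x_def y_def by simp
  have hb: "(h t)\<^sup>2 \<le> lm\<^sup>2/2"
  proof -
    have "\<bar>ep*lm/2 * sin (a t)^2 / s t\<bar> \<le> ep*lm/(2* sqrt \<mu>1)"
    proof -
      have "ep*lm/2 * sin (a t)^2 \<le> ep*lm/2 * 1" using ep lm by (intro mult_left_mono) (auto simp: abs_square_le_1)
      then have "ep*lm/2 * sin (a t)^2 / s t \<le> ep*lm/2 / sqrt \<mu>1"
        using sge[OF t] mu1 ep lm by (intro frac_le) auto
      then show ?thesis using sp[OF t] ep lm by (simp add: field_simps)
    qed
    moreover have "\<bar>c1 t / (4 * c0 t)\<bar> \<le> M/(4*\<mu>1)"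
      using c1b[OF t] cb[OF t] mu1 M_nonneg c0pos[OF t] by (simp add: abs_div) (intro frac_le, auto)
    ultimately have "\<bar>h t\<bar> \<le> ep*lm/(2* sqrt \<mu>1) + Dm + M/(4*\<mu>1)" unfolding h_def using Dm by linarith
    then have "(h t)\<^sup>2 \<le> (ep*lm/(2* sqrt \<mu>1) + Dm + M/(4*\<mu>1))\<^sup>2"
      by (metis abs_ge_zero power2_abs power_mono)
    then show ?thesis using A by linarith
  qed
  have key: "lm\<^sup>2 * min (c0 t) 1 / 2 \<le> (h t * x + lm * s t * y)\<^sup>2 + lm\<^sup>2 * x\<^sup>2"
  proof -
    have q1: "(h t * x + lm * s t * y)\<^sup>2 \<ge> (lm * s t * y)\<^sup>2 / 2 - (h t * x)\<^sup>2"
    proof -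
      have "0 \<le> (lm * s t * y / sqrt 2 + sqrt 2 * (h t * x))\<^sup>2" by simp
      then show ?thesis by (simp add: power2_eq_square field_simps)
    qed
    have q2: "(h t * x)\<^sup>2 \<le> lm\<^sup>2/2 * x\<^sup>2"
      unfolding power_mult_distrib by (rule mult_right_mono[OF hb]) simp
    have q3: "(lm * s t * y)\<^sup>2 = lm\<^sup>2 * c0 t * y\<^sup>2" using s2[OF t] by (simp add: power_mult_distrib power2_eq_square)
    have q4: "lm\<^sup>2 * min (c0 t) 1 / 2 \<le> lm\<^sup>2 * c0 t * y\<^sup>2 / 2 + lm\<^sup>2/2 * x\<^sup>2"
    proof -
      have "min (c0 t) 1 * (x\<^sup>2 + y\<^sup>2) \<le> c0 t * y\<^sup>2 + x\<^sup>2"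
        by (simp add: distrib_left) (smt (verit) mult_right_mono min.cobounded1 min.cobounded2 zero_le_power2 mult_left_le_one_le mult.commute)
      then have "lm\<^sup>2/2 * (min (c0 t) 1 * (x\<^sup>2 + y\<^sup>2)) \<le> lm\<^sup>2/2 * (c0 t * y\<^sup>2 + x\<^sup>2)"
        by (rule mult_left_mono) simp
      then show ?thesis unfolding xy by (simp add: algebra_simps)
    qed
    show ?thesis using q1 q2 q3 q4 by linarith
  qed
  define E where "E = exp (th t - Dm * t)"
  have Epos: "E > 0" unfolding E_def by simp
  have Pt: "P t = E * exp (- ln (c0 t) / 4)" unfolding P_def E_def by (simp add: exp_add[symmetric])
  have P0: "P 0 = exp (- ln (c0 0) / 4)" unfolding P_def using th0 by simp
  have c00: "c0 0 > 0" "c0 0 \<le> \<mu>2" using c0pos[of 0] cb[of 0] by auto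
  have c0t: "c0 t > 0" "\<mu>1 \<le> c0 t" "c0 t \<le> \<mu>2" using c0pos[OF t] cb[OF t] by auto
  have s0: "(s 0)\<^sup>2 = c0 0" using s2[of 0] by (simp add: power2_eq_square)
  have KP: "(K * P t)\<^sup>2 * lm\<^sup>2 = E\<^sup>2 / (sqrt (c0 t) * sqrt (c0 0))"
  proof -
    have "(K * P t)\<^sup>2 * lm\<^sup>2 = (P t)\<^sup>2 / ((P 0)\<^sup>2 * (s 0)\<^sup>2)"
    proof -
      have "P 0 \<noteq> 0" "s 0 \<noteq> 0" "lm \<noteq> 0" using sp[of 0] lm unfolding P_def by auto
      then show ?thesis unfolding K_def by (simp add: power_mult_distrib power_divide)
    qed
    also have "\<dots> = E\<^sup>2 * (1 / sqrt (c0 t)) / ((1 / sqrt (c0 0)) * c0 0)"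
      unfolding Pt P0 s0 power_mult_distrib e4[OF c0t(1)] e4[OF c00(1)] ..
    also have "\<dots> = E\<^sup>2 / (sqrt (c0 t) * sqrt (c0 0))"
    proof -
      have "c0 0 = sqrt (c0 0) * sqrt (c0 0)" using c00 by (simp add: real_sqrt_mult[symmetric])
      then have "(1 / sqrt (c0 0)) * c0 0 = sqrt (c0 0)" using c00 by (metis divide_self_if mult.assoc
          mult_1 real_sqrt_gt_0_iff less_irrefl times_divide_eq_left)
      then show ?thesis by simp
    qed
    finally show ?thesis .
  qed
  have en: "(wd t)\<^sup>2 + lm\<^sup>2 * (w t)\<^sup>2 = (K * P t)\<^sup>2 * ((h t * x + lm * s t * y)\<^sup>2 + lm\<^sup>2 * x\<^sup>2)"
  proof -
    have "wd t = K * P t * (h t * x + lm * s t * y)" "w t = K * P t * x"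
      using uq unfolding V_def W_def x_def y_def by auto
    then show ?thesis by algebra
  qed
  have "(K * P t)\<^sup>2 * (lm\<^sup>2 * min (c0 t) 1 / 2) \<le> (wd t)\<^sup>2 + lm\<^sup>2 * (w t)\<^sup>2"
    unfolding en by (rule mult_left_mono[OF key]) simp
  moreover have "(K * P t)\<^sup>2 * (lm\<^sup>2 * min (c0 t) 1 / 2) = E\<^sup>2 * min (c0 t) 1 / (2 * (sqrt (c0 t) * sqrt (c0 0)))"
    using KP by (simp add: field_simps)
  moreover have "E\<^sup>2 * min \<mu>1 1 / (2 * \<mu>2) \<le> E\<^sup>2 * min (c0 t) 1 / (2 * (sqrt (c0 t) * sqrt (c0 0)))"
  proof (rule frac_le)
    show "E\<^sup>2 * min \<mu>1 1 \<le> E\<^sup>2 * min (c0 t) 1" using c0t by (intro mult_left_mono) auto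
    have "sqrt (c0 t) * sqrt (c0 0) \<le> sqrt \<mu>2 * sqrt \<mu>2" using c0t c00 by (intro mult_mono) auto
    then show "2 * (sqrt (c0 t) * sqrt (c0 0)) \<le> 2 * \<mu>2" using mu2 by simp
    show "0 < 2 * (sqrt (c0 t) * sqrt (c0 0))" using c0t c00 by simp
  qed (use mu1 c0t in auto)
  moreover have "(\<mu>1 * min 1 \<mu>1 / (2 * \<mu>2\<^sup>2)) * exp ((1 / (4 * sqrt \<mu>2)) * ep * lm * t - 2 * Dm * t)
      \<le> E\<^sup>2 * min \<mu>1 1 / (2 * \<mu>2)"
  proof -
    have "exp ((1 / (4 * sqrt \<mu>2)) * ep * lm * t - 2 * Dm * t - ln (\<mu>2/\<mu>1)) \<le> E\<^sup>2"
      unfolding E_def using th_lb by (simp add: power2_eq_square exp_add[symmetric])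
    moreover have "exp ((1 / (4 * sqrt \<mu>2)) * ep * lm * t - 2 * Dm * t - ln (\<mu>2/\<mu>1))
       = exp ((1 / (4 * sqrt \<mu>2)) * ep * lm * t - 2 * Dm * t) * (\<mu>1/\<mu>2)"
      using mu1 mu2 by (simp add: exp_diff)
    ultimately have "exp ((1 / (4 * sqrt \<mu>2)) * ep * lm * t - 2 * Dm * t) * (\<mu>1/\<mu>2) * (min \<mu>1 1 / (2 * \<mu>2)) \<le> E\<^sup>2 * (min \<mu>1 1 / (2 * \<mu>2))"
      using mu1 mu2 by (intro mult_right_mono) auto
    moreover have "exp ((1 / (4 * sqrt \<mu>2)) * ep * lm * t - 2 * Dm * t) * (\<mu>1/\<mu>2) * (min \<mu>1 1 / (2 * \<mu>2))
      = (\<mu>1 * min 1 \<mu>1 / (2 * \<mu>2\<^sup>2)) * exp ((1 / (4 * sqrt \<mu>2)) * ep * lm * t - 2 * Dm * t)"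
      by (simp add: min.commute power2_eq_square field_simps)
    ultimately show ?thesis by simp
  qed
  ultimately show ?thesis by linarith
qed

end

definition lipc :: "real \<Rightarrow> (real \<Rightarrow> real) \<Rightarrow> real \<Rightarrow> real \<Rightarrow> bool" where
  "lipc lm u B C \<longleftrightarrow> (\<forall>t\<ge>0. \<bar>u t\<bar> \<le> B) \<and> (\<forall>t\<ge>0. \<forall>s\<ge>0. \<bar>u t - u s\<bar> \<le> C * lm * \<bar>t - s\<bar>)"

definition UL :: "(real \<Rightarrow> real \<Rightarrow> real) \<Rightarrow> bool" where
  "UL u \<longleftrightarrow> (\<exists>B C. C \<ge> 0 \<and> (\<forall>lm\<ge>1. lipc lm (u lm) B C))"

lemma lipc_B_nonneg: "lipc lm u B C \<Longrightarrow> 0 \<le> B"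
  unfolding lipc_def by (metis abs_ge_zero order_trans order_refl)

lemma lipc_mult:
  assumes f: "lipc lm f B1 C1" and g: "lipc lm g B2 C2" and lm: "lm \<ge> 0"
  shows "lipc lm (\<lambda>t. f t * g t) (B1 * B2) (B1 * C2 + B2 * C1)"
proof -
  have B1: "0 \<le> B1" using lipc_B_nonneg[OF f] .
  have B2: "0 \<le> B2" using lipc_B_nonneg[OF g] .
  have "\<bar>f t * g t\<bar> \<le> B1 * B2" if "t \<ge> 0" for t
    using f g that unfolding lipc_def by (simp add: abs_mult mult_mono')
  moreover have "\<bar>f t * g t - f s * g s\<bar> \<le> (B1 * C2 + B2 * C1) * lm * \<bar>t - s\<bar>" if "t \<ge> 0" "s \<ge> 0" for t s
  proof -
    have "f t * g t - f s * g s = f t * (g t - g s) + g s * (f t - f s)" by (simp add: algebra_simps)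
    then have "\<bar>f t * g t - f s * g s\<bar> \<le> \<bar>f t\<bar> * \<bar>g t - g s\<bar> + \<bar>g s\<bar> * \<bar>f t - f s\<bar>"
      by (metis abs_mult abs_triangle_ineq)
    also have "\<dots> \<le> B1 * (C2 * lm * \<bar>t - s\<bar>) + B2 * (C1 * lm * \<bar>t - s\<bar>)"
      using f g that unfolding lipc_def by (intro add_mono mult_mono) auto
    finally show ?thesis by (simp add: algebra_simps)
  qed
  ultimately show ?thesis unfolding lipc_def by auto
qed

lemma lipc_inv:
  assumes f: "lipc lm f B C" and m: "m > 0" and fm: "\<And>t. t \<ge> 0 \<Longrightarrow> f t \<ge> m"
  shows "lipc lm (\<lambda>t. 1 / f t) (1/m) (C / m\<^sup>2)"
proof -
  have "\<bar>1 / f t\<bar> \<le> 1/m" if "t \<ge> 0" for t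
    using fm[OF that] m by (simp add: frac_le)
  moreover have "\<bar>1 / f t - 1 / f s\<bar> \<le> C / m\<^sup>2 * lm * \<bar>t - s\<bar>" if "t \<ge> 0" "s \<ge> 0" for t s
  proof -
    have ft: "f t \<ge> m" "f s \<ge> m" using fm that by auto
    have "0 \<le> C * lm * \<bar>t - s\<bar>" using f that unfolding lipc_def by (meson abs_ge_zero order_trans)
    have "1 / f t - 1 / f s = (f s - f t) / (f t * f s)" using ft m by (simp add: field_simps)
    then have "\<bar>1 / f t - 1 / f s\<bar> = \<bar>f t - f s\<bar> / (f t * f s)" using ft m by (simp add: abs_div abs_minus_commute)
    also have "\<dots> \<le> (C * lm * \<bar>t - s\<bar>) / (m * m)"
      using f that ft m \<open>0 \<le> C * lm * \<bar>t - s\<bar>\<close> unfolding lipc_def by (intro frac_le mult_mono) auto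
    finally show ?thesis by (simp add: power2_eq_square)
  qed
  ultimately show ?thesis unfolding lipc_def by auto
qed

lemma lipc_cong: "lipc lm v B C \<Longrightarrow> (\<And>t. t \<ge> 0 \<Longrightarrow> u t = v t) \<Longrightarrow> lipc lm u B C"
  unfolding lipc_def by auto

lemma UL_mult: "UL f \<Longrightarrow> UL g \<Longrightarrow> UL (\<lambda>lm t. f lm t * g lm t)"
proof -
  assume "UL f" "UL g"
  then obtain B1 C1 B2 C2 where f: "C1 \<ge> 0" "\<forall>lm\<ge>1. lipc lm (f lm) B1 C1"
    and g: "C2 \<ge> 0" "\<forall>lm\<ge>1. lipc lm (g lm) B2 C2" unfolding UL_def by blast
  have "B1 \<ge> 0" "B2 \<ge> 0" using f g lipc_B_nonneg by auto
  then show ?thesis unfolding UL_def using f g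
    by (intro exI[of _ "B1 * B2"] exI[of _ "B1 * C2 + B2 * C1"]) (auto intro!: lipc_mult)
qed

lemma UL_inv: "UL f \<Longrightarrow> m > 0 \<Longrightarrow> (\<And>lm t. lm \<ge> 1 \<Longrightarrow> t \<ge> 0 \<Longrightarrow> f lm t \<ge> m) \<Longrightarrow> UL (\<lambda>lm t. 1 / f lm t)"
proof -
  assume "UL f" "m > 0" and fm: "\<And>lm t. lm \<ge> 1 \<Longrightarrow> t \<ge> 0 \<Longrightarrow> f lm t \<ge> m"
  then obtain B C where f: "C \<ge> 0" "\<forall>lm\<ge>1. lipc lm (f lm) B C" unfolding UL_def by blast
  show ?thesis unfolding UL_def using f \<open>m > 0\<close> fm
    by (intro exI[of _ "1/m"] exI[of _ "C / m\<^sup>2"]) (auto intro!: lipc_inv)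
qed

lemma UL_cong: "UL v \<Longrightarrow> (\<And>lm t. lm \<ge> 1 \<Longrightarrow> t \<ge> 0 \<Longrightarrow> u lm t = v lm t) \<Longrightarrow> UL u"
  unfolding UL_def by (metis lipc_cong)

lemma UL_fixed:
  assumes "\<And>t. t \<ge> 0 \<Longrightarrow> \<bar>f t\<bar> \<le> B" "\<And>t s. t \<ge> 0 \<Longrightarrow> s \<ge> 0 \<Longrightarrow> \<bar>f t - f s\<bar> \<le> L * \<bar>t - s\<bar>" "L \<ge> 0"
  shows "UL (\<lambda>lm. f)"
proof -
  have "\<bar>f t - f s\<bar> \<le> L * lm * \<bar>t - s\<bar>" if lm: "lm \<ge> 1" and ts: "t \<ge> 0" "s \<ge> 0" for lm t s
  proof -
    have "L * \<bar>t - s\<bar> \<le> L * lm * \<bar>t - s\<bar>"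
      using mult_right_mono[OF mult_left_mono[OF lm \<open>L \<ge> 0\<close>], of "\<bar>t - s\<bar>"] by simp
    then show ?thesis using assms(2)[OF ts] by simp
  qed
  then show ?thesis unfolding UL_def lipc_def using assms(1,3) by blast
qed

lemma min_powr:
  fixes a b \<alpha> :: real
  assumes "a \<ge> 0" "b \<ge> 0" "0 < \<alpha>" "\<alpha> < 1"
  shows "min a b \<le> a powr (1 - \<alpha>) * b powr \<alpha>"
proof (cases "a \<le> b")
  case True
  show ?thesis
  proof (cases "a = 0")
    case False
    then have "a = a powr (1 - \<alpha>) * a powr \<alpha>" using assms by (simp add: powr_add[symmetric])
    also have "\<dots> \<le> a powr (1 - \<alpha>) * b powr \<alpha>" using assms True by (intro mult_left_mono powr_mono2) auto
    finally show ?thesis using True by simp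
  qed (use assms in simp)
next
  case False
  show ?thesis
  proof (cases "b = 0")
    case F: False
    then have "b = b powr (1 - \<alpha>) * b powr \<alpha>" using assms by (simp add: powr_add[symmetric])
    also have "\<dots> \<le> a powr (1 - \<alpha>) * b powr \<alpha>" using assms False by (intro mult_right_mono powr_mono2) auto
    finally show ?thesis using False by simp
  qed (use assms in simp)
qed

lemma lipc_holder:
  assumes u: "lipc lm u B C" and lm: "lm \<ge> 0" and C: "C \<ge> 0" and a: "0 < \<alpha>" "\<alpha> < 1"
    and ts: "t \<ge> 0" "s \<ge> 0"
  shows "\<bar>u t - u s\<bar> \<le> ((2 * B) powr (1 - \<alpha>) * C powr \<alpha>) * lm powr \<alpha> * \<bar>t - s\<bar> powr \<alpha>"
proof -
  have B: "B \<ge> 0" using lipc_B_nonneg[OF u] .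
  have "\<bar>u t - u s\<bar> \<le> 2 * B" using u ts unfolding lipc_def
    by (smt (verit) abs_triangle_ineq4)
  moreover have "\<bar>u t - u s\<bar> \<le> C * lm * \<bar>t - s\<bar>" using u ts unfolding lipc_def by auto
  ultimately have "\<bar>u t - u s\<bar> \<le> min (2 * B) (C * lm * \<bar>t - s\<bar>)" by simp
  also have "\<dots> \<le> (2 * B) powr (1 - \<alpha>) * (C * lm * \<bar>t - s\<bar>) powr \<alpha>"
    using B C lm a by (intro min_powr) auto
  also have "(C * lm * \<bar>t - s\<bar>) powr \<alpha> = C powr \<alpha> * lm powr \<alpha> * \<bar>t - s\<bar> powr \<alpha>"
    using C lm by (simp add: powr_mult)
  finally show ?thesis by (simp add: mult.assoc)
qed

lemma UL_holder:
  assumes "UL u" "0 < \<alpha>" "\<alpha> < 1"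
  shows "\<exists>K\<ge>0. \<forall>lm\<ge>1. \<forall>t\<ge>0. \<forall>s\<ge>0. \<bar>u lm t - u lm s\<bar> \<le> K * lm powr \<alpha> * \<bar>t - s\<bar> powr \<alpha>"
proof -
  obtain B C where u: "C \<ge> 0" "\<forall>lm\<ge>1. lipc lm (u lm) B C" using assms(1) unfolding UL_def by blast
  have B: "B \<ge> 0" using u lipc_B_nonneg[of 1] by auto
  show ?thesis
    by (rule exI[of _ "(2 * B) powr (1 - \<alpha>) * C powr \<alpha>"]) (use u B assms in \<open>auto intro!: lipc_holder\<close>)
qed

context setting begin

lemma UL_c0: "UL (\<lambda>lm. c0)"
proof (rule UL_fixed[where B=\<mu>2 and L=M])
  show "\<bar>c0 t\<bar> \<le> \<mu>2" if "t \<ge> 0" for t using cb[OF that] c0pos[OF that] by simp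
  show "\<bar>c0 t - c0 s\<bar> \<le> M * \<bar>t - s\<bar>" if "t \<ge> 0" "s \<ge> 0" for t s
    by (rule deriv_lip[OF d1 c1b that(2,1)])
qed (rule M_nonneg)
lemma UL_c1: "UL (\<lambda>lm. c1)"
proof (rule UL_fixed[where B=M and L=M])
  show "\<bar>c1 t\<bar> \<le> M" if "t \<ge> 0" for t using c1b[OF that] .
  show "\<bar>c1 t - c1 s\<bar> \<le> M * \<bar>t - s\<bar>" if "t \<ge> 0" "s \<ge> 0" for t s
    by (rule deriv_lip[OF d2 c2b that(2,1)])
qed (rule M_nonneg)
lemma UL_c2: "UL (\<lambda>lm. c2)"
proof (rule UL_fixed[where B=M and L=M])
  show "\<bar>c2 t\<bar> \<le> M" if "t \<ge> 0" for t using c2b[OF that] .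
  show "\<bar>c2 t - c2 s\<bar> \<le> M * \<bar>t - s\<bar>" if "t \<ge> 0" "s \<ge> 0" for t s
    by (rule deriv_lip[OF d3 c3b that(2,1)])
qed (rule M_nonneg)

lemma UL_s: "UL (\<lambda>lm t. sqrt (c0 t))"
proof (rule UL_fixed[where B="sqrt \<mu>2" and L="M / (2 * sqrt \<mu>1)"])
  show "\<bar>sqrt (c0 t)\<bar> \<le> sqrt \<mu>2" if "t \<ge> 0" for t using cb[OF that] c0pos[OF that] by simp
  show "\<bar>sqrt (c0 t) - sqrt (c0 s)\<bar> \<le> M / (2 * sqrt \<mu>1) * \<bar>t - s\<bar>" if "t \<ge> 0" "s \<ge> 0" for t s
  proof (rule deriv_lip[OF deriv_s _ that(2,1)])
    show "\<bar>c1 x / (2 * sqrt (c0 x))\<bar> \<le> M / (2 * sqrt \<mu>1)" if "x \<ge> 0" for x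
      using c1b[OF that] cb[OF that] mu1 M_nonneg by (simp add: abs_div) (intro frac_le, auto)
  qed
  show "0 \<le> M / (2 * sqrt \<mu>1)" using M_nonneg mu1 by simp
qed

lemma sin_phase_lip:
  assumes "lm \<ge> 0" "t \<ge> 0" "s \<ge> 0" "k \<ge> 0"
  shows "\<bar>sin (k * phase c0 lm t) - sin (k * phase c0 lm s)\<bar> \<le> k * sqrt \<mu>2 * lm * \<bar>t - s\<bar>"
proof (rule deriv_lip[OF _ _ assms(3,2)])
  show "((\<lambda>t. sin (k * phase c0 lm t)) has_real_derivative cos (k * phase c0 lm x) * (k * (lm * sqrt (c0 x)))) (at x within {0..})"
    if "x \<ge> 0" for x using deriv_phase[OF that] by (auto intro!: derivative_eq_intros)
  show "\<bar>cos (k * phase c0 lm x) * (k * (lm * sqrt (c0 x)))\<bar> \<le> k * sqrt \<mu>2 * lm" if "x \<ge> 0" for x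
  proof -
    have "\<bar>cos (k * phase c0 lm x)\<bar> * (k * (lm * sqrt (c0 x))) \<le> 1 * (k * (lm * sqrt \<mu>2))"
      using cb[OF that] c0pos[OF that] assms by (intro mult_mono mult_left_mono) auto
    then show ?thesis using assms c0pos[OF that] by (simp add: abs_mult mult_ac)
  qed
qed


lemma UL_sin: "UL (\<lambda>lm t. sin (phase c0 lm t))"
proof -
  have "lipc lm (\<lambda>t. sin (phase c0 lm t)) 1 (sqrt \<mu>2)" if "lm \<ge> 1" for lm
    unfolding lipc_def using sin_phase_lip[of lm _ _ 1] that by auto
  then show ?thesis unfolding UL_def by (intro exI[of _ 1] exI[of _ "sqrt \<mu>2"]) (use mu2 in auto)
qed

lemma UL_invc0: "UL (\<lambda>lm t. 1 / c0 t)"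
  by (rule UL_inv[OF UL_c0 mu1]) (use cb in auto)
lemma UL_invs: "UL (\<lambda>lm t. 1 / sqrt (c0 t))"
  by (rule UL_inv[OF UL_s, of "sqrt \<mu>1"]) (use cb mu1 in auto)


lemma UL_u5: "UL (\<lambda>lm t. c2 t / c0 t)"
  by (rule UL_cong[OF UL_mult[OF UL_c2 UL_invc0]]) simp
lemma UL_u3: "UL (\<lambda>lm t. (c1 t / c0 t)\<^sup>2)"
  by (rule UL_cong[OF UL_mult[OF UL_mult[OF UL_c1 UL_invc0] UL_mult[OF UL_c1 UL_invc0]]])
    (simp add: power2_eq_square)
lemma UL_u2: "UL (\<lambda>lm t. sin (phase c0 lm t) ^ 4 / c0 t)"
  by (rule UL_cong[OF UL_mult[OF UL_mult[OF UL_mult[OF UL_mult[OF UL_sin UL_sin] UL_sin] UL_sin] UL_invc0]])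
    (simp add: power4_eq_xxxx)
lemma UL_u4: "UL (\<lambda>lm t. c1 t / c0 t powr (3/2) * (sin (phase c0 lm t))\<^sup>2)"
  by (rule UL_cong[OF UL_mult[OF UL_mult[OF UL_mult[OF UL_c1 UL_invc0] UL_invs] UL_mult[OF UL_sin UL_sin]]])
    (simp add: power2_eq_square c0_powr32)
end

context setting begin

lemma R_holder:
  assumes a: "0 < \<alpha>" "\<alpha> < 1"
  shows "\<exists>K2 K3 K4 K5. K2 \<ge> 0 \<and> K3 \<ge> 0 \<and> K4 \<ge> 0 \<and> K5 \<ge> 0 \<and>
    (\<forall>lm ep Dm t s. lm \<ge> 1 \<longrightarrow> ep \<ge> 0 \<longrightarrow> t \<ge> 0 \<longrightarrow> s \<ge> 0 \<longrightarrow>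
      \<bar>(gam lm ep Dm t - c0 t + ep * sin (2 * phase c0 lm t)) - (gam lm ep Dm s - c0 s + ep * sin (2 * phase c0 lm s))\<bar>
      \<le> (ep\<^sup>2/4*K2 + 5/(16*lm\<^sup>2)*K3 + ep/(2*lm)*K4 + 1/(4*lm\<^sup>2)*K5) * lm powr \<alpha> * \<bar>t - s\<bar> powr \<alpha>)"
proof -
  obtain K2 where K2: "K2 \<ge> 0" "\<And>lm t s. lm \<ge> 1 \<Longrightarrow> t \<ge> 0 \<Longrightarrow> s \<ge> 0 \<Longrightarrow>
     \<bar>sin (phase c0 lm t) ^ 4 / c0 t - sin (phase c0 lm s) ^ 4 / c0 s\<bar> \<le> K2 * lm powr \<alpha> * \<bar>t - s\<bar> powr \<alpha>"
    using UL_holder[OF UL_u2 a] by blast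
  obtain K3 where K3: "K3 \<ge> 0" "\<And>lm t s. lm \<ge> 1 \<Longrightarrow> t \<ge> 0 \<Longrightarrow> s \<ge> 0 \<Longrightarrow>
     \<bar>(c1 t / c0 t)\<^sup>2 - (c1 s / c0 s)\<^sup>2\<bar> \<le> K3 * lm powr \<alpha> * \<bar>t - s\<bar> powr \<alpha>"
    using UL_holder[OF UL_u3 a] by blast
  obtain K4 where K4: "K4 \<ge> 0" "\<And>lm t s. lm \<ge> 1 \<Longrightarrow> t \<ge> 0 \<Longrightarrow> s \<ge> 0 \<Longrightarrow>
     \<bar>c1 t / c0 t powr (3/2) * (sin (phase c0 lm t))\<^sup>2 - c1 s / c0 s powr (3/2) * (sin (phase c0 lm s))\<^sup>2\<bar> \<le> K4 * lm powr \<alpha> * \<bar>t - s\<bar> powr \<alpha>"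
    using UL_holder[OF UL_u4 a] by blast
  obtain K5 where K5: "K5 \<ge> 0" "\<And>lm t s. lm \<ge> 1 \<Longrightarrow> t \<ge> 0 \<Longrightarrow> s \<ge> 0 \<Longrightarrow>
     \<bar>c2 t / c0 t - c2 s / c0 s\<bar> \<le> K5 * lm powr \<alpha> * \<bar>t - s\<bar> powr \<alpha>"
    using UL_holder[OF UL_u5 a] by blast
  show ?thesis
  proof (intro exI conjI allI impI)
    fix lm ep Dm t s :: real assume lm: "lm \<ge> 1" and ep: "ep \<ge> 0" and ts: "t \<ge> 0" "s \<ge> 0"
    define Q where "Q = lm powr \<alpha> * \<bar>t - s\<bar> powr \<alpha>"
    define A2 where "A2 = sin (phase c0 lm t) ^ 4 / c0 t - sin (phase c0 lm s) ^ 4 / c0 s"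
    define A3 where "A3 = (c1 t / c0 t)\<^sup>2 - (c1 s / c0 s)\<^sup>2"
    define A4 where "A4 = c1 t / c0 t powr (3/2) * (sin (phase c0 lm t))\<^sup>2 - c1 s / c0 s powr (3/2) * (sin (phase c0 lm s))\<^sup>2"
    define A5 where "A5 = c2 t / c0 t - c2 s / c0 s"
    have eq: "(gam lm ep Dm t - c0 t + ep * sin (2 * phase c0 lm t)) - (gam lm ep Dm s - c0 s + ep * sin (2 * phase c0 lm s))
       = - (ep\<^sup>2/4) * A2 - 5/(16*lm\<^sup>2) * A3 + ep/(2*lm) * A4 + 1/(4*lm\<^sup>2) * A5"
      unfolding gam_def Let_def A2_def A3_def A4_def A5_def by (simp only: right_diff_distrib mult_minus_left)
    have b2: "\<bar>A2\<bar> \<le> K2 * Q" unfolding A2_def Q_def using K2(2)[OF lm ts] by (simp add: mult.assoc)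
    have b3: "\<bar>A3\<bar> \<le> K3 * Q" unfolding A3_def Q_def using K3(2)[OF lm ts] by (simp add: mult.assoc)
    have b4: "\<bar>A4\<bar> \<le> K4 * Q" unfolding A4_def Q_def using K4(2)[OF lm ts] by (simp add: mult.assoc)
    have b5: "\<bar>A5\<bar> \<le> K5 * Q" unfolding A5_def Q_def using K5(2)[OF lm ts] by (simp add: mult.assoc)
    have c2: "\<bar>- (ep\<^sup>2/4) * A2\<bar> \<le> ep\<^sup>2/4 * (K2 * Q)" using mult_left_mono[OF b2, of "ep\<^sup>2/4"] by (simp add: abs_mult)
    have c3: "\<bar>5/(16*lm\<^sup>2) * A3\<bar> \<le> 5/(16*lm\<^sup>2) * (K3 * Q)" using mult_left_mono[OF b3, of "5/(16*lm\<^sup>2)"] by (simp add: abs_mult)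
    have c4: "\<bar>ep/(2*lm) * A4\<bar> \<le> ep/(2*lm) * (K4 * Q)" using mult_left_mono[OF b4, of "ep/(2*lm)"] ep lm by (simp add: abs_mult)
    have c5: "\<bar>1/(4*lm\<^sup>2) * A5\<bar> \<le> 1/(4*lm\<^sup>2) * (K5 * Q)" using mult_left_mono[OF b5, of "1/(4*lm\<^sup>2)"] by (simp add: abs_mult)
    have "\<bar>- (ep\<^sup>2/4) * A2 - 5/(16*lm\<^sup>2) * A3 + ep/(2*lm) * A4 + 1/(4*lm\<^sup>2) * A5\<bar>
      \<le> ep\<^sup>2/4 * (K2 * Q) + 5/(16*lm\<^sup>2) * (K3 * Q) + ep/(2*lm) * (K4 * Q) + 1/(4*lm\<^sup>2) * (K5 * Q)"
      using c2 c3 c4 c5 by linarith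
    then show "\<bar>(gam lm ep Dm t - c0 t + ep * sin (2 * phase c0 lm t)) - (gam lm ep Dm s - c0 s + ep * sin (2 * phase c0 lm s))\<bar>
      \<le> (ep\<^sup>2/4*K2 + 5/(16*lm\<^sup>2)*K3 + ep/(2*lm)*K4 + 1/(4*lm\<^sup>2)*K5) * lm powr \<alpha> * \<bar>t - s\<bar> powr \<alpha>"
      unfolding eq Q_def by (simp add: algebra_simps)
  qed (use K2 K3 K4 K5 in auto)
qed

end

context setting begin

lemma sin_holder:
  assumes a: "0 < \<alpha>" "\<alpha> < 1" and lm: "lm \<ge> 0" and ts: "t \<ge> 0" "s \<ge> 0"
  shows "\<bar>sin (2 * phase c0 lm t) - sin (2 * phase c0 lm s)\<bar> \<le> 2 * \<mu>2 powr (\<alpha>/2) * lm powr \<alpha> * \<bar>t - s\<bar> powr \<alpha>"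
proof -
  have "\<bar>sin (2 * phase c0 lm t) - sin (2 * phase c0 lm s)\<bar> \<le> 2"
    using abs_sin_le_one[of "2 * phase c0 lm t"] abs_sin_le_one[of "2 * phase c0 lm s"] by linarith
  then have "\<bar>sin (2 * phase c0 lm t) - sin (2 * phase c0 lm s)\<bar> \<le> min 2 (2 * sqrt \<mu>2 * lm * \<bar>t - s\<bar>)"
    using sin_phase_lip[OF lm ts(1,2), of 2] by simp
  also have "\<dots> \<le> 2 powr (1 - \<alpha>) * (2 * sqrt \<mu>2 * lm * \<bar>t - s\<bar>) powr \<alpha>"
    using a lm mu2 by (intro min_powr) auto
  also have "(2 * sqrt \<mu>2 * lm * \<bar>t - s\<bar>) powr \<alpha> = 2 powr \<alpha> * sqrt \<mu>2 powr \<alpha> * lm powr \<alpha> * \<bar>t - s\<bar> powr \<alpha>"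
    using lm by (simp add: powr_mult)
  also have "sqrt \<mu>2 powr \<alpha> = \<mu>2 powr (\<alpha>/2)"
    using mu2 by (simp add: powr_half_sqrt[symmetric] powr_powr)
  also have "2 powr (1 - \<alpha>) * (2 powr \<alpha> * \<mu>2 powr (\<alpha>/2) * lm powr \<alpha> * \<bar>t - s\<bar> powr \<alpha>)
     = (2 powr (1 - \<alpha>) * 2 powr \<alpha>) * \<mu>2 powr (\<alpha>/2) * lm powr \<alpha> * \<bar>t - s\<bar> powr \<alpha>" by (simp add: mult_ac)
  also have "2 powr (1 - \<alpha>) * 2 powr \<alpha> = (2::real)" by (simp add: powr_add[symmetric])
  finally show ?thesis .
qed

lemma hold_pt:
  assumes a: "0 < \<alpha>" "\<alpha> < 1" and lm: "lm \<ge> 0" and ep: "ep \<ge> 0" and h: "h > 0"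
    and H0: "\<And>t s. t \<ge> 0 \<Longrightarrow> s \<ge> 0 \<Longrightarrow> \<bar>c0 t - c0 s\<bar> \<le> H0 * \<bar>t - s\<bar> powr \<alpha>"
    and R: "\<And>t s. t \<ge> 0 \<Longrightarrow> s \<ge> 0 \<Longrightarrow>
      \<bar>(gam lm ep Dm t - c0 t + ep * sin (2 * phase c0 lm t)) - (gam lm ep Dm s - c0 s + ep * sin (2 * phase c0 lm s))\<bar>
      \<le> \<eta> * \<bar>t - s\<bar> powr \<alpha>"
  shows "Hold \<alpha> (gam lm ep Dm) \<le> ereal (max (H0 + 2 * ep / h powr \<alpha> + \<eta>) (M * h powr (1 - \<alpha>) + 2 * \<mu>2 powr (\<alpha>/2) * (ep * lm powr \<alpha>) + \<eta>))"
  unfolding Hold_def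
proof (rule SUP_least)
  fix p assume "p \<in> {(t::real, s::real). t \<ge> 0 \<and> s \<ge> 0 \<and> t \<noteq> s}"
  then obtain t s where p: "p = (t, s)" and ts: "t \<ge> 0" "s \<ge> 0" "t \<noteq> s" by auto
  define d where "d = \<bar>t - s\<bar>"
  have d: "d > 0" unfolding d_def using ts by auto
  have dp: "d powr \<alpha> > 0" using d by simp
  define S where "S = sin (2 * phase c0 lm t) - sin (2 * phase c0 lm s)"
  define RR where "RR = (gam lm ep Dm t - c0 t + ep * sin (2 * phase c0 lm t)) - (gam lm ep Dm s - c0 s + ep * sin (2 * phase c0 lm s))"
  have eq: "gam lm ep Dm t - gam lm ep Dm s = (c0 t - c0 s) - ep * S + RR" unfolding S_def RR_def by (simp add: algebra_simps)
  have tri: "\<bar>gam lm ep Dm t - gam lm ep Dm s\<bar> \<le> \<bar>c0 t - c0 s\<bar> + ep * \<bar>S\<bar> + \<bar>RR\<bar>"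
  proof -
    have "\<bar>(c0 t - c0 s) - ep * S + RR\<bar> \<le> \<bar>c0 t - c0 s\<bar> + \<bar>ep * S\<bar> + \<bar>RR\<bar>" by arith
    then show ?thesis unfolding eq using ep by (simp add: abs_mult)
  qed
  have RR: "\<bar>RR\<bar> \<le> \<eta> * d powr \<alpha>" unfolding RR_def d_def by (rule R[OF ts(1,2)])
  have S2: "\<bar>S\<bar> \<le> 2" unfolding S_def
    using abs_sin_le_one[of "2 * phase c0 lm t"] abs_sin_le_one[of "2 * phase c0 lm s"] by linarith
  have "\<bar>gam lm ep Dm t - gam lm ep Dm s\<bar> \<le> max (H0 + 2 * ep / h powr \<alpha> + \<eta>) (M * h powr (1 - \<alpha>) + 2 * \<mu>2 powr (\<alpha>/2) * (ep * lm powr \<alpha>) + \<eta>) * d powr \<alpha>"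
  proof (cases "d \<ge> h")
    case True
    have c0b: "\<bar>c0 t - c0 s\<bar> \<le> H0 * d powr \<alpha>" unfolding d_def by (rule H0[OF ts(1,2)])
    have "h powr \<alpha> \<le> d powr \<alpha>" using True h a by (intro powr_mono2) auto
    then have "2 \<le> 2 * d powr \<alpha> / h powr \<alpha>" using h by (simp add: field_simps)
    then have "ep * \<bar>S\<bar> \<le> ep * (2 * d powr \<alpha> / h powr \<alpha>)" using S2 ep by (intro mult_left_mono) auto
    also have "\<dots> = 2 * ep / h powr \<alpha> * d powr \<alpha>" by simp
    finally have "\<bar>gam lm ep Dm t - gam lm ep Dm s\<bar> \<le> (H0 + 2 * ep / h powr \<alpha> + \<eta>) * d powr \<alpha>"
      using tri c0b RR by (simp add: algebra_simps)
    also have "\<dots> \<le> max (H0 + 2 * ep / h powr \<alpha> + \<eta>) (M * h powr (1 - \<alpha>) + 2 * \<mu>2 powr (\<alpha>/2) * (ep * lm powr \<alpha>) + \<eta>) * d powr \<alpha>"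
      using dp by (intro mult_right_mono) auto
    finally show ?thesis .
  next
    case False
    have "\<bar>c0 t - c0 s\<bar> \<le> M * d" unfolding d_def by (rule deriv_lip[OF d1 c1b ts(2,1)])
    also have "M * d = M * d powr (1 - \<alpha>) * d powr \<alpha>" using d by (simp add: mult.assoc powr_add[symmetric])
    also have "\<dots> \<le> M * h powr (1 - \<alpha>) * d powr \<alpha>"
      using False a d M_nonneg dp by (intro mult_right_mono mult_left_mono powr_mono2) auto
    finally have c0b: "\<bar>c0 t - c0 s\<bar> \<le> M * h powr (1 - \<alpha>) * d powr \<alpha>" .
    have "ep * \<bar>S\<bar> \<le> ep * (2 * \<mu>2 powr (\<alpha>/2) * lm powr \<alpha> * d powr \<alpha>)"
      unfolding S_def d_def using sin_holder[OF a lm ts(1,2)] ep by (intro mult_left_mono) auto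
    then have "\<bar>gam lm ep Dm t - gam lm ep Dm s\<bar> \<le> (M * h powr (1 - \<alpha>) + 2 * \<mu>2 powr (\<alpha>/2) * (ep * lm powr \<alpha>) + \<eta>) * d powr \<alpha>"
      using tri c0b RR by (simp add: algebra_simps)
    also have "\<dots> \<le> max (H0 + 2 * ep / h powr \<alpha> + \<eta>) (M * h powr (1 - \<alpha>) + 2 * \<mu>2 powr (\<alpha>/2) * (ep * lm powr \<alpha>) + \<eta>) * d powr \<alpha>"
      using dp by (intro mult_right_mono) auto
    finally show ?thesis .
  qed
  then have "\<bar>gam lm ep Dm t - gam lm ep Dm s\<bar> / \<bar>t - s\<bar> powr \<alpha>
      \<le> max (H0 + 2 * ep / h powr \<alpha> + \<eta>) (M * h powr (1 - \<alpha>) + 2 * \<mu>2 powr (\<alpha>/2) * (ep * lm powr \<alpha>) + \<eta>)"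
    using dp unfolding d_def by (simp add: divide_le_eq)
  then show "ereal (\<bar>gam lm ep Dm (fst p) - gam lm ep Dm (snd p)\<bar> / \<bar>fst p - snd p\<bar> powr \<alpha>)
      \<le> ereal (max (H0 + 2 * ep / h powr \<alpha> + \<eta>) (M * h powr (1 - \<alpha>) + 2 * \<mu>2 powr (\<alpha>/2) * (ep * lm powr \<alpha>) + \<eta>))"
    unfolding p fst_conv snd_conv ereal_less_eq(3) .
qed

end

theorem mainTheorem8:
  fixes \<mu>1 \<mu>2 \<alpha> \<delta> \<sigma> :: real
    and c0 c1 c2 c3 :: "real \<Rightarrow> real"
    and lam eps :: "nat \<Rightarrow> real"
    and w wd :: "nat \<Rightarrow> real \<Rightarrow> real"
  assumes mu: "0 < \<mu>1" "\<mu>1 < \<mu>2"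
    and alpha: "0 < \<alpha>" "\<alpha> < 1"
    and delta: "\<delta> \<ge> 0"
    and sigma: "0 < \<sigma>" "\<sigma> < 1/2"
    and c0_pos: "\<And>t. t \<ge> 0 \<Longrightarrow> c0 t > 0"
    and d1: "\<And>t. t \<ge> 0 \<Longrightarrow> (c0 has_real_derivative c1 t) (at t within {0..})"
    and d2: "\<And>t. t \<ge> 0 \<Longrightarrow> (c1 has_real_derivative c2 t) (at t within {0..})"
    and d3: "\<And>t. t \<ge> 0 \<Longrightarrow> (c2 has_real_derivative c3 t) (at t within {0..})"
    and c3_cont: "continuous_on {0..} c3"
    and c0_bounds: "\<And>t. t \<ge> 0 \<Longrightarrow> \<mu>1 \<le> c0 t \<and> c0 t \<le> \<mu>2"
    and deriv_bdd: "\<exists>M. \<forall>t\<ge>0. \<bar>c1 t\<bar> + \<bar>c2 t\<bar> + \<bar>c3 t\<bar> \<le> M"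
    and lam_pos: "\<And>n. lam n > 0"
    and eps_pos: "\<And>n. eps n > 0"
    and lam_lim: "filterlim lam at_top sequentially"
    and eps_lim: "eps \<longlonglongrightarrow> 0"
    and limsup_fin: "limsup (\<lambda>n. ereal (eps n * lam n powr \<alpha>)) < \<infinity>"
    and w_init: "\<And>n. w n 0 = 0" "\<And>n. wd n 0 = 1"
    and w_deriv: "\<And>n t. t \<ge> 0 \<Longrightarrow> (w n has_real_derivative wd n t) (at t within {0..})"
    and w_ode: "\<And>n t. t \<ge> 0 \<Longrightarrow> (wd n has_real_derivative
        (- 2 * \<delta> * lam n powr (2 * \<sigma>) * wd n t
         - (lam n)\<^sup>2 * gamma c0 c1 c2 \<delta> \<sigma> (eps n) (lam n) t * w n t)) (at t within {0..})"
  shows "uniform_limit {0..} (\<lambda>n t. gamma c0 c1 c2 \<delta> \<sigma> (eps n) (lam n) t) c0 sequentially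
    \<and> limsup (\<lambda>n. Hold \<alpha> (gamma c0 c1 c2 \<delta> \<sigma> (eps n) (lam n)))
        \<le> max (Hold \<alpha> c0) (ereal (2 * \<mu>2 powr (\<alpha> / 2)) * limsup (\<lambda>n. ereal (eps n * lam n powr \<alpha>)))
    \<and> (\<forall>\<^sub>F n in sequentially. \<forall>t\<ge>0.
        (wd n t)\<^sup>2 + (lam n)\<^sup>2 * (w n t)\<^sup>2
          \<ge> (\<mu>1 * min 1 \<mu>1 / (2 * \<mu>2\<^sup>2))
             * exp ((1 / (4 * sqrt \<mu>2)) * eps n * lam n * t - 2 * \<delta> * lam n powr (2 * \<sigma>) * t))"
proof -
  obtain M where Mb: "\<forall>t\<ge>0. \<bar>c1 t\<bar> + \<bar>c2 t\<bar> + \<bar>c3 t\<bar> \<le> M" using deriv_bdd by blast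
  interpret S: setting \<mu>1 \<mu>2 M c0 c1 c2 c3
    by unfold_locales (use mu d1 d2 d3 c0_bounds Mb in auto)
  define Dm where "Dm = (\<lambda>n. \<delta> * lam n powr (2*\<sigma>))"
  have gg: "gamma c0 c1 c2 \<delta> \<sigma> (eps n) (lam n) = S.gam (lam n) (eps n) (Dm n)" for n
    unfolding Dm_def using S.gamma_gam[OF lam_pos[of n]] by auto
  have Dm2: "(Dm n)\<^sup>2 / (lam n)\<^sup>2 = \<delta>\<^sup>2 * lam n powr (4*\<sigma> - 2)" for n
  proof -
    have l: "lam n > 0" by (rule lam_pos)
    have "(lam n powr (2*\<sigma>))\<^sup>2 = lam n powr (4*\<sigma>)" by (simp add: power2_eq_square powr_add[symmetric])
    moreover have "lam n powr (4*\<sigma> - 2) = lam n powr (4*\<sigma>) / (lam n)\<^sup>2" using l by (simp add: powr_diff)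
    ultimately show ?thesis unfolding Dm_def by (simp add: power_mult_distrib)
  qed
  have inv0: "(\<lambda>n. inverse (lam n)) \<longlonglongrightarrow> 0" by (rule tendsto_inverse_0_at_top[OF lam_lim])
  have Bnd_eq: "S.Bnd (lam n) (eps n) (Dm n) = eps n + (eps n)\<^sup>2/(4*\<mu>1) + 5*M\<^sup>2/(16*\<mu>1\<^sup>2) * (inverse (lam n))\<^sup>2
      + M/(2*(\<mu>1 * sqrt \<mu>1)) * eps n * inverse (lam n) + M/(4*\<mu>1) * (inverse (lam n))\<^sup>2
      + \<delta>\<^sup>2 * lam n powr (4*\<sigma> - 2)" for n
    unfolding S.Bnd_def Dm2[symmetric] using lam_pos[of n]
    by (simp add: power2_eq_square field_simps)
  have Bnd0: "(\<lambda>n. S.Bnd (lam n) (eps n) (Dm n)) \<longlonglongrightarrow> 0"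
  proof -
    have p: "(\<lambda>n. lam n powr (4*\<sigma> - 2)) \<longlonglongrightarrow> 0" using sigma by (intro tendsto_neg_powr lam_lim) auto
    have "(\<lambda>n. eps n + (eps n)\<^sup>2/(4*\<mu>1) + 5*M\<^sup>2/(16*\<mu>1\<^sup>2) * (inverse (lam n))\<^sup>2
      + M/(2*(\<mu>1 * sqrt \<mu>1)) * eps n * inverse (lam n) + M/(4*\<mu>1) * (inverse (lam n))\<^sup>2
      + \<delta>\<^sup>2 * lam n powr (4*\<sigma> - 2)) \<longlonglongrightarrow> 0 + 0\<^sup>2/(4*\<mu>1) + 5*M\<^sup>2/(16*\<mu>1\<^sup>2) * 0\<^sup>2
      + M/(2*(\<mu>1 * sqrt \<mu>1)) * 0 * 0 + M/(4*\<mu>1) * 0\<^sup>2 + \<delta>\<^sup>2 * 0"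
      using mu by (intro tendsto_intros eps_lim inv0 p) auto
    then show ?thesis unfolding Bnd_eq by simp
  qed
  have part1: "uniform_limit {0..} (\<lambda>n t. gamma c0 c1 c2 \<delta> \<sigma> (eps n) (lam n) t) c0 sequentially"
  proof (rule uniform_limitI)
    fix e :: real assume e: "e > 0"
    have "\<forall>\<^sub>F n in sequentially. S.Bnd (lam n) (eps n) (Dm n) < e" using order_tendstoD(2)[OF Bnd0 e] .
    then show "\<forall>\<^sub>F n in sequentially. \<forall>x\<in>{0..}. dist (gamma c0 c1 c2 \<delta> \<sigma> (eps n) (lam n) x) (c0 x) < e"
    proof eventually_elim
      case (elim n)
      show ?case
      proof
        fix x :: real assume "x \<in> {0..}"
        then have "\<bar>S.gam (lam n) (eps n) (Dm n) x - c0 x\<bar> \<le> S.Bnd (lam n) (eps n) (Dm n)"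
          using S.gam_bound[OF lam_pos, of "eps n" x n "Dm n"] eps_pos[of n] by auto
        then show "dist (gamma c0 c1 c2 \<delta> \<sigma> (eps n) (lam n) x) (c0 x) < e"
          using elim unfolding gg dist_real_def by linarith
      qed
    qed
  qed
  have part2: "limsup (\<lambda>n. Hold \<alpha> (gamma c0 c1 c2 \<delta> \<sigma> (eps n) (lam n)))
        \<le> max (Hold \<alpha> c0) (ereal (2 * \<mu>2 powr (\<alpha> / 2)) * limsup (\<lambda>n. ereal (eps n * lam n powr \<alpha>)))"
  proof (cases "Hold \<alpha> c0 = \<infinity>")
    case True
    then show ?thesis by simp
  next
    case False
    define k where "k = 2 * \<mu>2 powr (\<alpha> / 2)"
    have k0: "k \<ge> 0" unfolding k_def by simp
    define x where "x = (\<lambda>n. eps n * lam n powr \<alpha>)"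
    have xpos: "x n > 0" for n unfolding x_def using eps_pos[of n] lam_pos[of n] by simp
    have Lx0: "0 \<le> limsup (\<lambda>n. ereal (x n))"
    proof -
      have "0 \<le> liminf (\<lambda>n. ereal (x n))" by (rule Liminf_bounded) (use xpos in \<open>auto intro!: always_eventually less_imp_le\<close>)
      also have "\<dots> \<le> limsup (\<lambda>n. ereal (x n))" by (rule Liminf_le_Limsup) simp
      finally show ?thesis .
    qed
    obtain Lr where Lr: "limsup (\<lambda>n. ereal (x n)) = ereal Lr" "Lr \<ge> 0"
      using Lx0 limsup_fin unfolding x_def by (cases "limsup (\<lambda>n. ereal (eps n * lam n powr \<alpha>))") auto
    have Hge: "ereal (\<bar>c0 1 - c0 0\<bar> / \<bar>1 - 0\<bar> powr \<alpha>) \<le> Hold \<alpha> c0"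
      unfolding Hold_def by (rule SUP_upper2[of "(1, 0)"]) auto
    obtain H0 where H0: "Hold \<alpha> c0 = ereal H0"
      using False Hge by (cases "Hold \<alpha> c0") auto
    have H0pt: "\<bar>c0 t - c0 s\<bar> \<le> H0 * \<bar>t - s\<bar> powr \<alpha>" if ts: "t \<ge> 0" "s \<ge> 0" for t s
    proof (cases "t = s")
      case False
      have "ereal (\<bar>c0 t - c0 s\<bar> / \<bar>t - s\<bar> powr \<alpha>) \<le> Hold \<alpha> c0"
        unfolding Hold_def by (rule SUP_upper2[of "(t, s)"]) (use ts False in auto)
      then have "\<bar>c0 t - c0 s\<bar> / \<bar>t - s\<bar> powr \<alpha> \<le> H0" unfolding H0 by simp
      then show ?thesis using False by (simp add: divide_le_eq)
    qed simp
    obtain K2 K3 K4 K5 where K: "K2 \<ge> 0" "K3 \<ge> 0" "K4 \<ge> 0" "K5 \<ge> 0"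
      and KR: "\<And>lm ep Dm t s. lm \<ge> 1 \<Longrightarrow> ep \<ge> 0 \<Longrightarrow> t \<ge> 0 \<Longrightarrow> s \<ge> 0 \<Longrightarrow>
      \<bar>(S.gam lm ep Dm t - c0 t + ep * sin (2 * phase c0 lm t)) - (S.gam lm ep Dm s - c0 s + ep * sin (2 * phase c0 lm s))\<bar>
      \<le> (ep\<^sup>2/4*K2 + 5/(16*lm\<^sup>2)*K3 + ep/(2*lm)*K4 + 1/(4*lm\<^sup>2)*K5) * lm powr \<alpha> * \<bar>t - s\<bar> powr \<alpha>"
      using S.R_holder[OF alpha] by blast
    define \<eta> where "\<eta> = (\<lambda>n. ((eps n)\<^sup>2/4*K2 + 5/(16*(lam n)\<^sup>2)*K3 + eps n/(2*lam n)*K4 + 1/(4*(lam n)\<^sup>2)*K5) * lam n powr \<alpha>)"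
    have eta_eq: "\<eta> n = K2/4 * eps n * x n + (5*K3/16 + K5/4) * lam n powr (\<alpha> - 2) + K4/2 * eps n * lam n powr (\<alpha> - 1)" for n
    proof -
      have l: "lam n > 0" by (rule lam_pos)
      have q1: "lam n powr (\<alpha> - 2) = lam n powr \<alpha> / (lam n)\<^sup>2" using l by (simp add: powr_diff)
      have q2: "lam n powr (\<alpha> - 1) = lam n powr \<alpha> / lam n" using l by (simp add: powr_diff)
      show ?thesis unfolding \<eta>_def x_def q1 q2 using l by (simp add: field_simps power2_eq_square)
    qed
    have main: "limsup (\<lambda>n. Hold \<alpha> (gamma c0 c1 c2 \<delta> \<sigma> (eps n) (lam n))) \<le> ereal (max H0 (k * Lr) + e)" if e: "e > 0" for e
    proof -
      define e1 where "e1 = e / (2 + k)"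
      have e1: "e1 > 0" unfolding e1_def using e k0 by simp
      define h where "h = (e1 / (M + 1)) powr (1 / (1 - \<alpha>))"
      have M0: "M \<ge> 0" by (rule S.M_nonneg)
      have h: "h > 0" unfolding h_def using e1 M0 by simp
      have hp: "h powr (1 - \<alpha>) = e1 / (M + 1)" unfolding h_def using e1 M0 alpha by (simp add: powr_powr)
      have Mh: "M * h powr (1 - \<alpha>) \<le> e1" unfolding hp using e1 M0 by (simp add: field_simps)
      have E1: "\<forall>\<^sub>F n in sequentially. 1 \<le> lam n" using lam_lim unfolding filterlim_at_top by blast
      have E2: "\<forall>\<^sub>F n in sequentially. x n < Lr + e1"
        using Limsup_lessD[where y="ereal (Lr + e1)" and F=sequentially and f="\<lambda>n. ereal (x n)"] Lr e1 by auto
      have E2': "\<forall>\<^sub>F n in sequentially. x n < Lr + 1"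
        using Limsup_lessD[where y="ereal (Lr + 1)" and F=sequentially and f="\<lambda>n. ereal (x n)"] Lr by auto
      have E3: "\<forall>\<^sub>F n in sequentially. 2 * eps n / h powr \<alpha> < e1"
      proof -
        have "(\<lambda>n. 2 * eps n / h powr \<alpha>) \<longlonglongrightarrow> 2 * 0 / h powr \<alpha>" using h by (intro tendsto_intros eps_lim) auto
        then show ?thesis using e1 order_tendstoD(2) by fastforce
      qed
      have E4: "\<forall>\<^sub>F n in sequentially. K2/4 * eps n * (Lr + 1) + (5*K3/16 + K5/4) * lam n powr (\<alpha> - 2) + K4/2 * eps n * lam n powr (\<alpha> - 1) < e1"
      proof -
        have p1: "(\<lambda>n. lam n powr (\<alpha> - 2)) \<longlonglongrightarrow> 0" using alpha by (intro tendsto_neg_powr lam_lim) auto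
        have p2: "(\<lambda>n. lam n powr (\<alpha> - 1)) \<longlonglongrightarrow> 0" using alpha by (intro tendsto_neg_powr lam_lim) auto
        have "(\<lambda>n. K2/4 * eps n * (Lr + 1) + (5*K3/16 + K5/4) * lam n powr (\<alpha> - 2) + K4/2 * eps n * lam n powr (\<alpha> - 1))
           \<longlonglongrightarrow> K2/4 * 0 * (Lr + 1) + (5*K3/16 + K5/4) * 0 + K4/2 * 0 * 0"
          by (intro tendsto_intros eps_lim p1 p2)
        then show ?thesis using e1 order_tendstoD(2) by fastforce
      qed
      have "\<forall>\<^sub>F n in sequentially. Hold \<alpha> (gamma c0 c1 c2 \<delta> \<sigma> (eps n) (lam n)) \<le> ereal (max H0 (k * Lr) + e)"
        using E1 E2 E2' E3 E4
      proof eventually_elim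
        case (elim n)
        have eta_le: "\<eta> n \<le> e1"
        proof -
          have "K2/4 * eps n * x n \<le> K2/4 * eps n * (Lr + 1)"
            using elim(3) K eps_pos[of n] by (intro mult_left_mono) auto
          then show ?thesis unfolding eta_eq using elim(5) by linarith
        qed
        have "Hold \<alpha> (S.gam (lam n) (eps n) (Dm n)) \<le> ereal (max (H0 + 2 * eps n / h powr \<alpha> + \<eta> n) (M * h powr (1 - \<alpha>) + 2 * \<mu>2 powr (\<alpha>/2) * (eps n * lam n powr \<alpha>) + \<eta> n))"
        proof (rule S.hold_pt[OF alpha _ _ h H0pt])
          show "0 \<le> lam n" using lam_pos[of n] by simp
          show "0 \<le> eps n" using eps_pos[of n] by simp
          show "\<bar>(S.gam (lam n) (eps n) (Dm n) t - c0 t + eps n * sin (2 * phase c0 (lam n) t)) -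
                (S.gam (lam n) (eps n) (Dm n) s - c0 s + eps n * sin (2 * phase c0 (lam n) s))\<bar>
                \<le> \<eta> n * \<bar>t - s\<bar> powr \<alpha>" if "t \<ge> 0" "s \<ge> 0" for t s
            using KR[OF elim(1) _ that, of "eps n" "Dm n"] eps_pos[of n] unfolding \<eta>_def by simp
        qed auto
        also have "\<dots> \<le> ereal (max H0 (k * Lr) + e)"
        proof -
          have ke: "0 \<le> k * e1" using k0 e1 by simp
          have de: "(2 + k) * e1 = 2 * e1 + k * e1" by (simp add: algebra_simps)
          have a1: "H0 + 2 * eps n / h powr \<alpha> + \<eta> n \<le> max H0 (k * Lr) + (2 + k) * e1"
            using elim(4) eta_le ke de max.cobounded1[of H0 "k * Lr"] by linarith
          have "k * x n \<le> k * (Lr + e1)" using elim(2) k0 by (intro mult_left_mono) auto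
          moreover have "2 * \<mu>2 powr (\<alpha>/2) * (eps n * lam n powr \<alpha>) = k * x n" unfolding k_def x_def ..
          moreover have "k * (Lr + e1) = k * Lr + k * e1" by (simp add: algebra_simps)
          ultimately have a2: "M * h powr (1 - \<alpha>) + 2 * \<mu>2 powr (\<alpha>/2) * (eps n * lam n powr \<alpha>) + \<eta> n \<le> max H0 (k * Lr) + (2 + k) * e1"
            using Mh eta_le de max.cobounded2[of "k * Lr" H0] by linarith
          have "(2 + k) * e1 = e" unfolding e1_def using k0 by simp
          then show ?thesis using a1 a2 by simp
        qed
        finally show ?case unfolding gg .
      qed
      then show "limsup (\<lambda>n. Hold \<alpha> (gamma c0 c1 c2 \<delta> \<sigma> (eps n) (lam n))) \<le> ereal (max H0 (k * Lr) + e)"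
        by (rule Limsup_bounded)
    qed
    have "limsup (\<lambda>n. Hold \<alpha> (gamma c0 c1 c2 \<delta> \<sigma> (eps n) (lam n))) \<le> ereal (max H0 (k * Lr))"
    proof (rule ereal_le_epsilon2)
      fix e :: real assume "0 < e"
      from main[OF this] show "limsup (\<lambda>n. Hold \<alpha> (gamma c0 c1 c2 \<delta> \<sigma> (eps n) (lam n))) \<le> ereal (max H0 (k * Lr)) + ereal e"
        by (simp only: plus_ereal.simps)
    qed
    also have "ereal (max H0 (k * Lr)) = max (Hold \<alpha> c0) (ereal (2 * \<mu>2 powr (\<alpha> / 2)) * limsup (\<lambda>n. ereal (eps n * lam n powr \<alpha>)))"
      using Lr unfolding H0 k_def x_def by simp
    finally show ?thesis .
  qed
  have part3: "\<forall>\<^sub>F n in sequentially. \<forall>t\<ge>0.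
        (wd n t)\<^sup>2 + (lam n)\<^sup>2 * (w n t)\<^sup>2
          \<ge> (\<mu>1 * min 1 \<mu>1 / (2 * \<mu>2\<^sup>2))
             * exp ((1 / (4 * sqrt \<mu>2)) * eps n * lam n * t - 2 * \<delta> * lam n powr (2 * \<sigma>) * t)"
  proof -
    define r where "r = (\<lambda>n. eps n/(2* sqrt \<mu>1) + \<delta> * lam n powr (2*\<sigma> - 1) + M/(4*\<mu>1) * inverse (lam n))"
    have r0: "r \<longlonglongrightarrow> 0"
    proof -
      have p: "(\<lambda>n. lam n powr (2*\<sigma> - 1)) \<longlonglongrightarrow> 0" using sigma by (intro tendsto_neg_powr lam_lim) auto
      have "r \<longlonglongrightarrow> 0/(2* sqrt \<mu>1) + \<delta> * 0 + M/(4*\<mu>1) * 0"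
        unfolding r_def using mu by (intro tendsto_intros eps_lim inv0 p) auto
      then show ?thesis by simp
    qed
    have lr: "lam n * r n = eps n * lam n/(2* sqrt \<mu>1) + Dm n + M/(4*\<mu>1)" for n
    proof -
      have l: "lam n > 0" by (rule lam_pos)
      have "lam n * lam n powr (2*\<sigma> - 1) = lam n powr (2*\<sigma>)"
        using l by (simp add: powr_diff)
      then show ?thesis unfolding r_def Dm_def using l by (simp add: field_simps)
    qed
    have evA: "\<forall>\<^sub>F n in sequentially. (eps n * lam n/(2* sqrt \<mu>1) + Dm n + M/(4*\<mu>1))\<^sup>2 \<le> (lam n)\<^sup>2/2"
    proof -
      have "\<forall>\<^sub>F n in sequentially. \<bar>r n\<bar> < 1/2"
        using r0 unfolding tendsto_iff dist_real_def by (auto dest: spec[of _ "1/2"])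
      then show ?thesis
      proof eventually_elim
        case (elim n)
        have "(r n)\<^sup>2 \<le> (1/2)\<^sup>2" using elim by (metis abs_ge_zero less_imp_le power2_abs power_mono)
        then have "(lam n)\<^sup>2 * (r n)\<^sup>2 \<le> (lam n)\<^sup>2 * (1/2)\<^sup>2" by (rule mult_left_mono) simp
        moreover have "(lam n)\<^sup>2 * (1/2::real)\<^sup>2 = (lam n)\<^sup>2 / 4" by (simp add: power2_eq_square)
        moreover have "0 \<le> (lam n)\<^sup>2" by simp
        ultimately show ?case unfolding lr[symmetric] power_mult_distrib by linarith
      qed
    qed
    have evB: "\<forall>\<^sub>F n in sequentially. M \<le> lam n * (\<mu>1 * sqrt \<mu>1)"
    proof -
      have "\<forall>\<^sub>F n in sequentially. M / (\<mu>1 * sqrt \<mu>1) \<le> lam n"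
        using lam_lim unfolding filterlim_at_top by blast
      then show ?thesis
        by eventually_elim (use mu in \<open>simp add: divide_le_eq mult.commute\<close>)
    qed
    have evC: "\<forall>\<^sub>F n in sequentially. eps n/(2* sqrt \<mu>1* sqrt \<mu>2) \<le> ln (\<mu>2/\<mu>1)"
    proof -
      have "(\<lambda>n. eps n/(2* sqrt \<mu>1* sqrt \<mu>2)) \<longlonglongrightarrow> 0/(2* sqrt \<mu>1* sqrt \<mu>2)"
        using mu by (intro tendsto_intros eps_lim) auto
      moreover have "ln (\<mu>2/\<mu>1) > 0" using mu by simp
      ultimately show ?thesis using order_tendstoD(2) by (fastforce elim: eventually_mono)
    qed
    from evA evB evC show ?thesis
    proof eventually_elim
      case (elim n)
      show ?case
      proof (intro allI impI)
        fix t :: real assume t: "t \<ge> 0"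
        have "(wd n t)\<^sup>2 + (lam n)\<^sup>2 * (w n t)\<^sup>2 \<ge> (\<mu>1 * min 1 \<mu>1 / (2 * \<mu>2\<^sup>2))
             * exp ((1 / (4 * sqrt \<mu>2)) * eps n * lam n * t - 2 * Dm n * t)"
        proof (rule S.growth[OF lam_pos eps_pos _ elim(1) elim(2) elim(3)])
          show "0 \<le> Dm n" unfolding Dm_def using delta by simp
          show "w n 0 = 0" "wd n 0 = 1" using w_init by auto
          show "(w n has_real_derivative wd n x) (at x within {0..})" if "x \<ge> 0" for x
            using w_deriv[OF that] .
          show "(wd n has_real_derivative - 2 * Dm n * wd n x - (lam n)\<^sup>2 * S.gam (lam n) (eps n) (Dm n) x * w n x) (at x within {0..})"
            if "x \<ge> 0" for x
            using w_ode[OF that, of n] unfolding gg Dm_def by (simp add: mult.assoc)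
        qed (use t in auto)
        then show "(wd n t)\<^sup>2 + (lam n)\<^sup>2 * (w n t)\<^sup>2 \<ge> (\<mu>1 * min 1 \<mu>1 / (2 * \<mu>2\<^sup>2))
             * exp ((1 / (4 * sqrt \<mu>2)) * eps n * lam n * t - 2 * \<delta> * lam n powr (2 * \<sigma>) * t)"
          unfolding Dm_def by (simp add: mult.assoc)
      qed
    qed
  qed
  show ?thesis using part1 part2 part3 by blast
qed

end
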